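(* Fix $\lambda>0$. For every $C\in\mathbb R$, the set $$M_C=\big\{\big({}^t(x_1,x_2,x_3,0,0),\,{}^t(a_1,a_2,a_3)\big)\in\Lambda^2_-S^4:\ x_1^2+x_2^2+x_3^2=1,\ a_1x_1+a_2x_2-a_3x_3=C\big\}$$ (which equals $(\mathrm{SO}(3)\times\mathrm{SO}(2))\cdot\{({}^t(1,0,0,0,0),{}^t(C,r,0)):r\in\mathbb R\}$) is a coassociative submanifold of $(\Lambda^2_-S^4,\varphi_\lambda)$, homeomorphic to the total space of $TS^2$.
   Context: Let $S^4=\{x={}^t(x_1,\dots,x_5)\in\mathbb R^5:|x|=1\}$ with the round metric and let $\pi:\Lambda^2_-S^4\to S^4$ be the rank-3 bundle of anti-self-dual 2-forms. On $S^4\setminus\{x_5=\pm1\}$ use the oriented orthonormal frame $e_1=\frac{1}{\sqrt{1-x_5^2}}{}^t(-x_2,x_1,-x_4,x_3,0)$, $e_2=\frac{1}{\sqrt{1-x_5^2}}{}^t(-x_3,x_4,x_1,-x_2,0)$, $e_3=\frac{1}{\sqrt{1-x_5^2}}{}^t(-x_4,-x_3,x_2,x_1,0)$, $e_4=\frac{1}{\sqrt{1-x_5^2}}{}^t(-x_1x_5,-x_2x_5,-x_3x_5,-x_4x_5,1-x_5^2)$ with dual coframe $e^1,\dots,e^4$, and set $\omega_1=e^{12}-e^{34}$, $\omega_2=e^{13}-e^{42}$, $\omega_3=e^{14}-e^{23}$ ($e^{ij}=e^i\wedge e^j$), a local frame of $\Lambda^2_-S^4$. The point $\sum_i a_i\omega_i|_x$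 is written $(x,{}^t(a_1,a_2,a_3))$; $r^2=a_1^2+a_2^2+a_3^2$ is the squared fiber norm. Write $\nabla\omega_i=\sum_j\gamma_{ij}\otimes\omega_j$ for the connection induced by the Levi-Civita connection and $b_i=da_i+\sum_j a_j\pi^*\gamma_{ji}$. For $\lambda>0$ the Bryant–Salamon 3-form is $\varphi_\lambda=2s_\lambda\sum_{i=1}^3 b_i\wedge\pi^*\omega_i+s_\lambda^{-3}b_1\wedge b_2\wedge b_3$ with $s_\lambda=(\lambda+r^2)^{1/4}$; it is a torsion-free $G_2$-structure. A 4-dimensional submanifold $L$ is coassociative iff $\varphi_\lambda|_{TL}=0$. $\mathrm{SO}(5)$ acts on $\Lambda^2_-S^4$ by the induced action on 2-forms ($g\cdot\omega=(g^{-1})^*\omega$), preserving $\varphi_\lambda$; $\mathrm{SO}(3)\times\mathrm{SO}(2)\subset\mathrm{SO}(5)$ is block diagonal acting on $(x_1,x_2,x_3)$ and $(x_4,x_5)$. *)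

theory Defs
  imports "HOL-Analysis.Analysis"
begin

fun iter_dd :: "'a::real_normed_vector list \<Rightarrow> ('a \<Rightarrow> 'b::real_normed_vector) \<Rightarrow> 'a \<Rightarrow> 'b" where
  "iter_dd [] f = f"
| "iter_dd (v # vs) f = (\<lambda>x. frechet_derivative (iter_dd vs f) (at x) v)"

definition Cinf_on :: "'a::real_normed_vector set \<Rightarrow> ('a \<Rightarrow> 'b::real_normed_vector) \<Rightarrow> bool" where
  "Cinf_on S f \<longleftrightarrow> (\<forall>vs. iter_dd vs f differentiable_on S)"

definition local_param4 :: "'a::euclidean_space set \<Rightarrow> 'a set \<Rightarrow> (real^4) set \<Rightarrow> (real^4 \<Rightarrow> 'a) \<Rightarrow> bool" where
  "local_param4 M U V f \<longleftrightarrow>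
     open U \<and> open V \<and> Cinf_on V f \<and> f ` V = M \<inter> U \<and> inj_on f V \<and>
     continuous_on (M \<inter> U) (inv_into V f) \<and>
     (\<forall>v\<in>V. inj (frechet_derivative f (at v)))"

definition submanifold4 :: "'a::euclidean_space set \<Rightarrow> bool" where
  "submanifold4 M \<longleftrightarrow> (\<forall>p\<in>M. \<exists>U V f. p \<in> U \<and> local_param4 M U V f)"

definition tangent_space :: "'a::euclidean_space set \<Rightarrow> 'a \<Rightarrow> 'a set" where
  "tangent_space M p = {w. \<exists>U V f v. local_param4 M U V f \<and> v \<in> V \<and> f v = p \<and>
                              w \<in> range (frechet_derivative f (at v))}"

text \<open>Orthonormal frame e_1..e_4 of T S^4 on S^4 minus {x5 = +-1}.\<close>
definition frame :: "nat \<Rightarrow> real^5 \<Rightarrow> real^5" where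
  "frame i x = (1 / sqrt (1 - (x$5)\<^sup>2)) *\<^sub>R
     (if i = 1 then vector [- x$2, x$1, - x$4, x$3, 0]
      else if i = 2 then vector [- x$3, x$4, x$1, - x$2, 0]
      else if i = 3 then vector [- x$4, - x$3, x$2, x$1, 0]
      else vector [- x$1 * x$5, - x$2 * x$5, - x$3 * x$5, - x$4 * x$5, 1 - (x$5)\<^sup>2])"

definition cof :: "nat \<Rightarrow> real^5 \<Rightarrow> real^5 \<Rightarrow> real" where
  "cof i x u = frame i x \<bullet> u"

definition e2 :: "nat \<Rightarrow> nat \<Rightarrow> real^5 \<Rightarrow> real^5 \<Rightarrow> real^5 \<Rightarrow> real" where
  "e2 i j x u v = cof i x u * cof j x v - cof j x u * cof i x v"

definition omega :: "3 \<Rightarrow> real^5 \<Rightarrow> real^5 \<Rightarrow> real^5 \<Rightarrow> real" where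
  "omega k x u v =
     (if k = 1 then e2 1 2 x u v - e2 3 4 x u v
      else if k = 2 then e2 1 3 x u v - e2 4 2 x u v
      else e2 1 4 x u v - e2 2 3 x u v)"

text \<open>Pointwise inner product of 2-forms on T_x S^4 (e^ij, i<j, orthonormal).\<close>
definition form_inner :: "real^5 \<Rightarrow> (real^5 \<Rightarrow> real^5 \<Rightarrow> real) \<Rightarrow> (real^5 \<Rightarrow> real^5 \<Rightarrow> real) \<Rightarrow> real" where
  "form_inner x \<alpha> \<beta> =
     (\<Sum>c\<in>{1..4::nat}. \<Sum>d\<in>{c<..4}. \<alpha> (frame c x) (frame d x) * \<beta> (frame c x) (frame d x))"

text \<open>Connection 1-forms gamma_ij of the Levi-Civita connection on the frame
  omega_i:  nabla omega_i = sum_j gamma_ij (x) omega_j.  For tangent u, v the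
  covariant derivative (nabla_xi omega)(u,v) equals the ambient derivative of
  y |-> omega(y)(u,v) in direction xi, and |omega_j|^2 = 2.\<close>
definition conn :: "3 \<Rightarrow> 3 \<Rightarrow> real^5 \<Rightarrow> real^5 \<Rightarrow> real" where
  "conn i j x \<xi> = 1/2 * form_inner x
      (\<lambda>u v. frechet_derivative (\<lambda>y. omega i y u v) (at x) \<xi>) (omega j x)"

text \<open>Points of the total space are (x, a) with a the coordinates in the frame
  omega_i; tangent vectors are (xi, alpha) with xi tangent to S^4.\<close>
type_synonym bpt = "(real^5) \<times> (real^3)"

definition bform :: "3 \<Rightarrow> bpt \<Rightarrow> bpt \<Rightarrow> real" where
  "bform i p U = snd U $ i + (\<Sum>j\<in>UNIV. snd p $ j * conn j i (fst p) (fst U))"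

definition piom :: "3 \<Rightarrow> bpt \<Rightarrow> bpt \<Rightarrow> bpt \<Rightarrow> real" where
  "piom i p U V = omega i (fst p) (fst U) (fst V)"

definition svar :: "real \<Rightarrow> bpt \<Rightarrow> real" where
  "svar lam p = (lam + (norm (snd p))\<^sup>2) powr (1/4)"

definition phi :: "real \<Rightarrow> bpt \<Rightarrow> bpt \<Rightarrow> bpt \<Rightarrow> bpt \<Rightarrow> real" where
  "phi lam p U V W =
     2 * svar lam p * (\<Sum>i\<in>UNIV.
          bform i p U * piom i p V W - bform i p V * piom i p U W + bform i p W * piom i p U V)
   + (1 / (svar lam p) ^ 3) *
     (bform 1 p U * (bform 2 p V * bform 3 p W - bform 2 p W * bform 3 p V)
    - bform 1 p V * (bform 2 p U * bform 3 p W - bform 2 p W * bform 3 p U)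
    + bform 1 p W * (bform 2 p U * bform 3 p V - bform 2 p V * bform 3 p U))"

text \<open>The part of the total space covered by the frame.\<close>
definition chartdom :: "bpt set" where
  "chartdom = {(x, a). norm x = 1 \<and> x$5 \<noteq> 1 \<and> x$5 \<noteq> -1}"

definition coassociative :: "real \<Rightarrow> bpt set \<Rightarrow> bool" where
  "coassociative lam L \<longleftrightarrow> L \<subseteq> chartdom \<and> submanifold4 L \<and>
     (\<forall>p\<in>L. \<forall>U\<in>tangent_space L p. \<forall>V\<in>tangent_space L p. \<forall>W\<in>tangent_space L p.
        phi lam p U V W = 0)"

definition SOm :: "(real^'n^'n) set" where
  "SOm = {g. orthogonal_matrix g \<and> det g = 1}"

definition blk :: "real^3^3 \<Rightarrow> real^2^2 \<Rightarrow> real^5^5" where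
  "blk A B = vector [vector [A$1$1, A$1$2, A$1$3, 0, 0],
                     vector [A$2$1, A$2$2, A$2$3, 0, 0],
                     vector [A$3$1, A$3$2, A$3$3, 0, 0],
                     vector [0, 0, 0, B$1$1, B$1$2],
                     vector [0, 0, 0, B$2$1, B$2$2]]"

text \<open>Induced action g . omega = (g^-1)^* omega, in the coordinates a.\<close>
definition act :: "real^5^5 \<Rightarrow> bpt \<Rightarrow> bpt" where
  "act g p = (g *v fst p,
     (\<chi> i. 1/2 * form_inner (g *v fst p)
        (\<lambda>u v. \<Sum>j\<in>UNIV. snd p $ j * omega j (fst p) (transpose g *v u) (transpose g *v v))
        (omega i (g *v fst p))))"

definition MC :: "real \<Rightarrow> bpt set" where
  "MC C = {(x, a). x$4 = 0 \<and> x$5 = 0 \<and> (x$1)\<^sup>2 + (x$2)\<^sup>2 + (x$3)\<^sup>2 = 1 \<and>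
                   a$1 * x$1 + a$2 * x$2 - a$3 * x$3 = C}"

definition orbitC :: "real \<Rightarrow> bpt set" where
  "orbitC C = {act (blk A B) (vector [1, 0, 0, 0, 0], vector [C, r, 0]) | A B r.
                 A \<in> SOm \<and> B \<in> SOm}"

definition TS2 :: "((real^3) \<times> (real^3)) set" where
  "TS2 = {(p, v). norm p = 1 \<and> p \<bullet> v = 0}"

end

theory Submission
  imports Defs
begin

lemma exhaust_5:
  fixes x :: 5
  shows "x = 1 \<or> x = 2 \<or> x = 3 \<or> x = 4 \<or> x = 5"
proof (induct x)
  case (of_int z)
  then have "z = 0 \<or> z = 1 \<or> z = 2 \<or> z = 3 \<or> z = 4" by fastforce
  then show ?case by auto
qed

lemma forall_5: "(\<forall>i::5. P i) \<longleftrightarrow> P 1 \<and> P 2 \<and> P 3 \<and> P 4 \<and> P 5"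
  by (metis exhaust_5)

lemma UNIV_5: "UNIV = {1, 2, 3, 4, 5::5}"
  using exhaust_5 by auto

lemma sum_5: "sum f (UNIV::5 set) = f 1 + f 2 + f 3 + f 4 + f 5"
  unfolding UNIV_5 by (simp add: ac_simps)

lemma vector_5 [simp]:
 "(vector [x1,x2,x3,x4,x5] ::('a::zero)^5)$1 = x1"
 "(vector [x1,x2,x3,x4,x5] ::('a::zero)^5)$2 = x2"
 "(vector [x1,x2,x3,x4,x5] ::('a::zero)^5)$3 = x3"
 "(vector [x1,x2,x3,x4,x5] ::('a::zero)^5)$4 = x4"
 "(vector [x1,x2,x3,x4,x5] ::('a::zero)^5)$5 = x5"
  unfolding vector_def by simp_all

lemma vec5_eq_iff: "(x::'a^5) = y \<longleftrightarrow> x$1 = y$1 \<and> x$2 = y$2 \<and> x$3 = y$3 \<and> x$4 = y$4 \<and> x$5 = y$5"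
  by (auto simp: vec_eq_iff forall_5)

lemma vec3_eq_iff: "(x::'a^3) = y \<longleftrightarrow> x$1 = y$1 \<and> x$2 = y$2 \<and> x$3 = y$3"
  by (auto simp: vec_eq_iff forall_3)

lemma inner5: "(x::real^5) \<bullet> y = x$1*y$1 + x$2*y$2 + x$3*y$3 + x$4*y$4 + x$5*y$5"
  by (simp add: inner_vec_def sum_5)

lemma inner3: "(x::real^3) \<bullet> y = x$1*y$1 + x$2*y$2 + x$3*y$3"
  by (simp add: inner_vec_def sum_3)

lemma has_derivative_vec_nth' [derivative_intros]:
  "((\<lambda>y. y $ i) has_derivative (\<lambda>h. h $ i)) F"
  using bounded_linear_vec_nth bounded_linear_imp_has_derivative by blast

declare One_nat_def [simp del]

definition onS2 :: "real^5 \<Rightarrow> bool" where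
  "onS2 x \<longleftrightarrow> x$4 = 0 \<and> x$5 = 0 \<and> (x$1)\<^sup>2 + (x$2)\<^sup>2 + (x$3)\<^sup>2 = 1"

lemma frame_x50:
  assumes "x$5 = 0"
  shows "frame 1 x = vector [- x$2, x$1, - x$4, x$3, 0]"
    "frame 2 x = vector [- x$3, x$4, x$1, - x$2, 0]"
    "frame 3 x = vector [- x$4, - x$3, x$2, x$1, 0]"
    "frame 4 x = vector [0, 0, 0, 0, 1]"
  using assms by (simp_all add: frame_def)

lemma cof_x50:
  assumes "x$5 = 0"
  shows "cof 1 x u = - x$2 * u$1 + x$1 * u$2 - x$4 * u$3 + x$3 * u$4"
    "cof 2 x u = - x$3 * u$1 + x$4 * u$2 + x$1 * u$3 - x$2 * u$4"
    "cof 3 x u = - x$4 * u$1 - x$3 * u$2 + x$2 * u$3 + x$1 * u$4"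
    "cof 4 x u = u$5"
  using assms by (simp_all add: cof_def frame_x50 inner5)

lemma cof_frame:
  assumes "onS2 x"
  shows
  "cof 1 x (frame 1 x) = 1"
  "cof 1 x (frame 2 x) = 0"
  "cof 1 x (frame 3 x) = 0"
  "cof 1 x (frame 4 x) = 0"
  "cof 2 x (frame 1 x) = 0"
  "cof 2 x (frame 2 x) = 1"
  "cof 2 x (frame 3 x) = 0"
  "cof 2 x (frame 4 x) = 0"
  "cof 3 x (frame 1 x) = 0"
  "cof 3 x (frame 2 x) = 0"
  "cof 3 x (frame 3 x) = 1"
  "cof 3 x (frame 4 x) = 0"
  "cof 4 x (frame 1 x) = 0"
  "cof 4 x (frame 2 x) = 0"
  "cof 4 x (frame 3 x) = 0"
  "cof 4 x (frame 4 x) = 1"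
  using assms unfolding onS2_def
  by (simp_all add: cof_x50 frame_x50 power2_eq_square algebra_simps)

lemma sum_1_4: "sum f {1..4::nat} = f 1 + f 2 + f 3 + f 4"
proof -
  have "{1..4::nat} = {1,2,3,4}" by auto
  then show ?thesis by (simp add: add.assoc)
qed

lemma form_inner_expand:
  "form_inner x \<alpha> \<beta> =
     \<alpha> (frame 1 x) (frame 2 x) * \<beta> (frame 1 x) (frame 2 x) +
     \<alpha> (frame 1 x) (frame 3 x) * \<beta> (frame 1 x) (frame 3 x) +
     \<alpha> (frame 1 x) (frame 4 x) * \<beta> (frame 1 x) (frame 4 x) +
     \<alpha> (frame 2 x) (frame 3 x) * \<beta> (frame 2 x) (frame 3 x) +
     \<alpha> (frame 2 x) (frame 4 x) * \<beta> (frame 2 x) (frame 4 x) +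
     \<alpha> (frame 3 x) (frame 4 x) * \<beta> (frame 3 x) (frame 4 x)"
proof -
  have a: "{1<..4::nat} = {2,3,4}" "{2<..4::nat} = {3,4}" "{3<..4::nat} = {4}" "{4<..4::nat} = {}"
    by auto
  show ?thesis unfolding form_inner_def sum_1_4 a by (simp add: algebra_simps)
qed

lemma form_inner_omega:
  assumes "onS2 x"
  shows "form_inner x \<alpha> (omega 1 x) = \<alpha> (frame 1 x) (frame 2 x) - \<alpha> (frame 3 x) (frame 4 x)"
    "form_inner x \<alpha> (omega 2 x) = \<alpha> (frame 1 x) (frame 3 x) + \<alpha> (frame 2 x) (frame 4 x)"
    "form_inner x \<alpha> (omega 3 x) = \<alpha> (frame 1 x) (frame 4 x) - \<alpha> (frame 2 x) (frame 3 x)"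
  by (simp_all add: form_inner_expand omega_def e2_def cof_frame[OF assms])

definition pf :: "nat \<Rightarrow> real^5 \<Rightarrow> real^5" where
  "pf i x = (if i = 1 then vector [- x$2, x$1, - x$4, x$3, 0]
      else if i = 2 then vector [- x$3, x$4, x$1, - x$2, 0]
      else if i = 3 then vector [- x$4, - x$3, x$2, x$1, 0]
      else vector [- x$1 * x$5, - x$2 * x$5, - x$3 * x$5, - x$4 * x$5, 1 - (x$5)\<^sup>2])"

lemma frame_pf: "frame i x = (1 / sqrt (1 - (x$5)\<^sup>2)) *\<^sub>R pf i x"
  unfolding frame_def pf_def by simp

lemma cof_pf: "cof i x u = (1 / sqrt (1 - (x$5)\<^sup>2)) * (pf i x \<bullet> u)"
  unfolding cof_def frame_pf by simp

definition dcof :: "nat \<Rightarrow> real^5 \<Rightarrow> real^5 \<Rightarrow> real^5 \<Rightarrow> real" where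
  "dcof i x u h = (if i = 1 \<or> i = 2 \<or> i = 3 then pf i h \<bullet> u
      else - (x$1 * u$1 + x$2 * u$2 + x$3 * u$3 + x$4 * u$4) * h$5)"

lemma hd_pf_inner:
  assumes "x$5 = 0"
  shows "((\<lambda>y. pf i y \<bullet> u) has_derivative (\<lambda>h. dcof i x u h)) (at x)"
proof -
  consider "i = 1" | "i = 2" | "i = 3" | "i \<noteq> 1 \<and> i \<noteq> 2 \<and> i \<noteq> 3" by blast
  then show ?thesis
  proof cases
    case 1
    show ?thesis unfolding 1 pf_def dcof_def
      by (simp add: inner5, auto intro!: derivative_eq_intros simp: algebra_simps)
  next
    case 2
    show ?thesis unfolding 2 pf_def dcof_def
      by (simp add: inner5, auto intro!: derivative_eq_intros simp: algebra_simps)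
  next
    case 3
    show ?thesis unfolding 3 pf_def dcof_def
      by (simp add: inner5, auto intro!: derivative_eq_intros simp: algebra_simps)
  next
    case 4
    show ?thesis using 4 assms unfolding pf_def dcof_def
      by (simp add: inner5, auto intro!: derivative_eq_intros simp: algebra_simps)
  qed
qed

lemma hd_s:
  assumes "x$5 = 0"
  shows "((\<lambda>y. 1 / sqrt (1 - (y$5)\<^sup>2)) has_derivative (\<lambda>h. 0)) (at x)"
  using assms by (auto intro!: derivative_eq_intros)

lemma hd_cof:
  assumes "x$5 = 0"
  shows "((\<lambda>y. cof i y u) has_derivative (\<lambda>h. dcof i x u h)) (at x)"
proof -
  have "((\<lambda>y. (1 / sqrt (1 - (y$5)\<^sup>2)) * (pf i y \<bullet> u)) has_derivative
     (\<lambda>h. 1 / sqrt (1 - (x$5)\<^sup>2) * dcof i x u h + 0 * (pf i x \<bullet> u))) (at x)"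
    by (rule has_derivative_mult[OF hd_s[OF assms] hd_pf_inner[OF assms]])
  then show ?thesis using assms by (simp add: cof_pf)
qed

definition de2 :: "nat \<Rightarrow> nat \<Rightarrow> real^5 \<Rightarrow> real^5 \<Rightarrow> real^5 \<Rightarrow> real^5 \<Rightarrow> real" where
  "de2 i j x u v h = dcof i x u h * cof j x v + cof i x u * dcof j x v h
                   - (dcof j x u h * cof i x v + cof j x u * dcof i x v h)"

lemma hd_e2:
  assumes "x$5 = 0"
  shows "((\<lambda>y. e2 i j y u v) has_derivative (\<lambda>h. de2 i j x u v h)) (at x)"
  unfolding e2_def de2_def
  by (rule derivative_eq_intros hd_cof[OF assms] refl)+ (simp add: algebra_simps)

definition domega :: "3 \<Rightarrow> real^5 \<Rightarrow> real^5 \<Rightarrow> real^5 \<Rightarrow> real^5 \<Rightarrow> real" where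
  "domega k x u v h =
     (if k = 1 then de2 1 2 x u v h - de2 3 4 x u v h
      else if k = 2 then de2 1 3 x u v h - de2 4 2 x u v h
      else de2 1 4 x u v h - de2 2 3 x u v h)"

lemma hd_omega:
  assumes "x$5 = 0"
  shows "((\<lambda>y. omega k y u v) has_derivative (\<lambda>h. domega k x u v h)) (at x)"
  unfolding omega_def domega_def
  by (cases "k = 1"; cases "k = 2")
     (simp_all, (rule derivative_eq_intros hd_e2[OF assms] refl)+)

lemma fd_omega:
  assumes "x$5 = 0"
  shows "frechet_derivative (\<lambda>y. omega k y u v) (at x) = (\<lambda>h. domega k x u v h)"
  using frechet_derivative_at[OF hd_omega[OF assms]] by simp

definition tanS2 :: "real^5 \<Rightarrow> real^5 \<Rightarrow> bool" where
  "tanS2 x h \<longleftrightarrow> h$4 = 0 \<and> h$5 = 0 \<and> x$1 * h$1 + x$2 * h$2 + x$3 * h$3 = 0"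

lemma dcof_frame:
  assumes "onS2 x" "tanS2 x h"
  shows "dcof 1 x (frame 1 x) h = 0" "dcof 2 x (frame 2 x) h = 0" "dcof 3 x (frame 3 x) h = 0"
   "dcof 1 x (frame 2 x) h = h$2 * x$3 - h$3 * x$2"
   "dcof 1 x (frame 3 x) h = h$3 * x$1 - h$1 * x$3"
   "dcof 2 x (frame 3 x) h = h$1 * x$2 - h$2 * x$1"
   "dcof 2 x (frame 1 x) h = - (h$2 * x$3 - h$3 * x$2)"
   "dcof 3 x (frame 1 x) h = - (h$3 * x$1 - h$1 * x$3)"
   "dcof 3 x (frame 2 x) h = - (h$1 * x$2 - h$2 * x$1)"
   "dcof 1 x (frame 4 x) h = 0" "dcof 2 x (frame 4 x) h = 0" "dcof 3 x (frame 4 x) h = 0"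
   "dcof 4 x (frame c x) h = 0"
  using assms unfolding onS2_def tanS2_def
  by (simp_all add: dcof_def pf_def frame_x50 inner5 algebra_simps)

lemma conn_formula:
  assumes "onS2 x" "tanS2 x h"
  shows "conn 1 1 x h = 0" "conn 2 2 x h = 0" "conn 3 3 x h = 0"
    "conn 1 2 x h = x$2 * h$1 - x$1 * h$2" "conn 2 1 x h = - (x$2 * h$1 - x$1 * h$2)"
    "conn 1 3 x h = x$1 * h$3 - x$3 * h$1" "conn 3 1 x h = - (x$1 * h$3 - x$3 * h$1)"
    "conn 2 3 x h = x$2 * h$3 - x$3 * h$2" "conn 3 2 x h = - (x$2 * h$3 - x$3 * h$2)"
proof -
  have x5: "x$5 = 0" using assms(1) by (simp add: onS2_def)
  note fd = fd_omega[OF x5]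
  note simps = conn_def fd form_inner_omega[OF assms(1)] domega_def de2_def cof_frame[OF assms(1)]
     dcof_frame[OF assms]
  show "conn 1 1 x h = 0" "conn 2 2 x h = 0" "conn 3 3 x h = 0"
    "conn 1 2 x h = x$2 * h$1 - x$1 * h$2" "conn 2 1 x h = - (x$2 * h$1 - x$1 * h$2)"
    "conn 1 3 x h = x$1 * h$3 - x$3 * h$1" "conn 3 1 x h = - (x$1 * h$3 - x$3 * h$1)"
    "conn 2 3 x h = x$2 * h$3 - x$3 * h$2" "conn 3 2 x h = - (x$2 * h$3 - x$3 * h$2)"
    by (simp_all add: simps algebra_simps)
qed

definition tanMC :: "bpt \<Rightarrow> bpt \<Rightarrow> bool" where
  "tanMC p U \<longleftrightarrow> tanS2 (fst p) (fst U) \<and>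
     snd U$1 * fst p$1 + snd U$2 * fst p$2 - snd U$3 * fst p$3
     + snd p$1 * fst U$1 + snd p$2 * fst U$2 - snd p$3 * fst U$3 = 0"

lemma bform_perp:
  assumes "onS2 (fst p)" "tanMC p U"
  shows "bform 1 p U * fst p$1 + bform 2 p U * fst p$2 - bform 3 p U * fst p$3 = 0"
proof -
  obtain x a where p: "p = (x, a)" by (cases p)
  obtain h al where U: "U = (h, al)" by (cases U)
  have x: "onS2 x" and h: "tanS2 x h" and c: "al$1 * x$1 + al$2 * x$2 - al$3 * x$3
     + a$1 * h$1 + a$2 * h$2 - a$3 * h$3 = 0"
    using assms by (auto simp: p U tanMC_def)
  have R: "(x$1)\<^sup>2 + (x$2)\<^sup>2 + (x$3)\<^sup>2 = 1" using x by (simp add: onS2_def)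
  have o: "x$1 * h$1 + x$2 * h$2 + x$3 * h$3 = 0" using h by (simp add: tanS2_def)
  have e: "bform 1 p U * fst p$1 + bform 2 p U * fst p$2 - bform 3 p U * fst p$3
     = (al$1 * x$1 + al$2 * x$2 - al$3 * x$3 + a$1 * h$1 + a$2 * h$2 - a$3 * h$3)
       + (a$1 * h$1 - a$2 * h$2 * 0 + a$2 * h$2 - a$3 * h$3) * ((x$1)\<^sup>2 + (x$2)\<^sup>2 + (x$3)\<^sup>2 - 1)
       - (a$1 * x$1 + a$2 * x$2 - a$3 * x$3) * (x$1 * h$1 + x$2 * h$2 + x$3 * h$3)"
    by (simp add: p U bform_def sum_3 conn_formula[OF x h] power2_eq_square algebra_simps)
  show ?thesis unfolding e c R o by simp
qed

lemma omega_tan: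
  assumes "onS2 x" "tanS2 x u" "tanS2 x v"
  shows "omega 1 x u v = (x$1 * (u$2 * v$3 - u$3 * v$2) + x$2 * (u$3 * v$1 - u$1 * v$3) + x$3 * (u$1 * v$2 - u$2 * v$1)) * x$1"
    "omega 2 x u v = (x$1 * (u$2 * v$3 - u$3 * v$2) + x$2 * (u$3 * v$1 - u$1 * v$3) + x$3 * (u$1 * v$2 - u$2 * v$1)) * x$2"
    "omega 3 x u v = - ((x$1 * (u$2 * v$3 - u$3 * v$2) + x$2 * (u$3 * v$1 - u$1 * v$3) + x$3 * (u$1 * v$2 - u$2 * v$1)) * x$3)"
  using assms unfolding onS2_def tanS2_def
  by (simp_all add: omega_def e2_def cof_x50 algebra_simps)

lemma det3_perp:
  fixes u1 u2 u3 v1 v2 v3 w1 w2 w3 y1 y2 y3 :: real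
  assumes "u1 * y1+u2 * y2+u3 * y3 = 0" "v1 * y1+v2 * y2+v3 * y3 = 0" "w1 * y1+w2 * y2+w3 * y3 = 0"
    "y1\<^sup>2+y2\<^sup>2+y3\<^sup>2 = 1"
  shows "u1 * (v2 * w3 - w2 * v3) - v1 * (u2 * w3 - w2 * u3) + w1 * (u2 * v3 - v2 * u3) = 0"
proof -
  define D where "D = u1 * (v2 * w3 - w2 * v3) - v1 * (u2 * w3 - w2 * u3) + w1 * (u2 * v3 - v2 * u3)"
  have "D = D  *  (y1\<^sup>2+y2\<^sup>2+y3\<^sup>2)" using assms(4) by simp
  also have "\<dots> = (u1 * y1+u2 * y2+u3 * y3)  *  (y1 * (v2 * w3 - w2 * v3) + y2 * (v3 * w1-v1 * w3) + y3 * (v1 * w2-v2 * w1))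
     + (v1 * y1+v2 * y2+v3 * y3)  *  (y1 * (w2 * u3 - u2 * w3) + y2 * (w3 * u1-w1 * u3) + y3 * (w1 * u2-w2 * u1))
     + (w1 * y1+w2 * y2+w3 * y3)  *  (y1 * (u2 * v3 - v2 * u3) + y2 * (u3 * v1-u1 * v3) + y3 * (u1 * v2-u2 * v1))"
    unfolding D_def by (simp add: power2_eq_square algebra_simps)
  also have "\<dots> = 0" using assms by simp
  finally show ?thesis unfolding D_def .
qed

lemma phi_zero:
  assumes "onS2 (fst p)" "tanMC p U" "tanMC p V" "tanMC p W"
  shows "phi lam p U V W = 0"
proof -
  let ?x = "fst p"
  have tU: "tanS2 ?x (fst U)" and tV: "tanS2 ?x (fst V)" and tW: "tanS2 ?x (fst W)"
    using assms by (auto simp: tanMC_def)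
  note om = omega_tan[OF assms(1) tU tV] omega_tan[OF assms(1) tU tW] omega_tan[OF assms(1) tV tW]
  note bp = bform_perp[OF assms(1) assms(2)] bform_perp[OF assms(1) assms(3)] bform_perp[OF assms(1) assms(4)]
  have T: "(\<Sum>i\<in>UNIV. bform i p U * piom i p V W - bform i p V * piom i p U W + bform i p W * piom i p U V) = 0"
  proof -
    have "(\<Sum>i\<in>UNIV. bform i p U * piom i p V W - bform i p V * piom i p U W + bform i p W * piom i p U V)
      = (bform 1 p U * ?x$1 + bform 2 p U * ?x$2 - bform 3 p U * ?x$3) *
          (?x$1 * (fst V$2 * fst W$3 - fst V$3 * fst W$2) + ?x$2 * (fst V$3 * fst W$1 - fst V$1 * fst W$3) + ?x$3 * (fst V$1 * fst W$2 - fst V$2 * fst W$1))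
      - (bform 1 p V * ?x$1 + bform 2 p V * ?x$2 - bform 3 p V * ?x$3) *
          (?x$1 * (fst U$2 * fst W$3 - fst U$3 * fst W$2) + ?x$2 * (fst U$3 * fst W$1 - fst U$1 * fst W$3) + ?x$3 * (fst U$1 * fst W$2 - fst U$2 * fst W$1))
      + (bform 1 p W * ?x$1 + bform 2 p W * ?x$2 - bform 3 p W * ?x$3) *
          (?x$1 * (fst U$2 * fst V$3 - fst U$3 * fst V$2) + ?x$2 * (fst U$3 * fst V$1 - fst U$1 * fst V$3) + ?x$3 * (fst U$1 * fst V$2 - fst U$2 * fst V$1))"
      by (simp add: sum_3 piom_def om algebra_simps)
    also have "\<dots> = 0" using bp by simp
    finally show ?thesis .
  qed
  have R: "(?x$1)\<^sup>2 + (?x$2)\<^sup>2 + (- ?x$3)\<^sup>2 = 1" using assms(1) by (simp add: onS2_def)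
  have D: "bform 1 p U * (bform 2 p V * bform 3 p W - bform 2 p W * bform 3 p V)
    - bform 1 p V * (bform 2 p U * bform 3 p W - bform 2 p W * bform 3 p U)
    + bform 1 p W * (bform 2 p U * bform 3 p V - bform 2 p V * bform 3 p U) = 0"
    by (rule det3_perp[OF _ _ _ R]) (use bp in simp_all)
  show ?thesis unfolding phi_def T D by simp
qed

lemma hd_fst_nth [derivative_intros]: "((\<lambda>q::bpt. fst q $ i) has_derivative (\<lambda>H. fst H $ i)) F"
proof -
  have "bounded_linear (\<lambda>H::bpt. fst H $ i)"
    by (rule bounded_linear_compose[OF bounded_linear_vec_nth bounded_linear_fst])
  then show ?thesis by (rule bounded_linear_imp_has_derivative)
qed

lemma hd_snd_nth [derivative_intros]: "((\<lambda>q::bpt. snd q $ i) has_derivative (\<lambda>H. snd H $ i)) F"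
proof -
  have "bounded_linear (\<lambda>H::bpt. snd H $ i)"
    by (rule bounded_linear_compose[OF bounded_linear_vec_nth bounded_linear_snd])
  then show ?thesis by (rule bounded_linear_imp_has_derivative)
qed


lemma tan_constraint:
  assumes lp: "local_param4 M U' V f" and v: "v \<in> V" and G: "\<And>q. q \<in> M \<Longrightarrow> G q = c"
    and dG: "(G has_derivative DG) (at (f v))"
  shows "DG (frechet_derivative f (at v) w) = 0"
proof -
  have oV: "open V" and Cf: "Cinf_on V f" and im: "f ` V = M \<inter> U'"
    using lp unfolding local_param4_def by (blast, blast, blast)
  from Cf have "iter_dd [] f differentiable_on V" unfolding Cinf_on_def by (rule spec)
  then have "f differentiable_on V" by (simp only: iter_dd.simps)
  then have "f differentiable (at v within V)" using v unfolding differentiable_on_def by (rule bspec)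
  moreover have "at v within V = at v" by (rule at_within_open[OF v oV])
  ultimately have "f differentiable (at v)" by (simp only:)
  then have df: "(f has_derivative frechet_derivative f (at v)) (at v)"
    by (rule frechet_derivative_works[THEN iffD1])
  have ch: "((\<lambda>y. G (f y)) has_derivative (\<lambda>h. DG (frechet_derivative f (at v) h))) (at v)"
    by (rule has_derivative_compose[OF df dG])
  have "((\<lambda>y. c) has_derivative (\<lambda>h. 0)) (at v)" by (rule has_derivative_const)
  then have ch2: "((\<lambda>y. G (f y)) has_derivative (\<lambda>h. 0)) (at v)"
  proof (rule has_derivative_transform_within_open[OF _ oV v])
    fix y assume "y \<in> V"
    then have "f y \<in> f ` V" by (rule imageI)
    then have "f y \<in> M" unfolding im by (rule IntD1)
    then show "c = G (f y)" by (rule G[symmetric])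
  qed
  have "(\<lambda>h. DG (frechet_derivative f (at v) h)) = (\<lambda>h. 0)"
    by (rule has_derivative_unique[OF ch ch2])
  from fun_cong[OF this, of w] show ?thesis by (simp only:)
qed

lemma MC_onS2: "p \<in> MC C \<Longrightarrow> onS2 (fst p)"
  by (auto simp: MC_def onS2_def)



lemma tangent_MC:
  assumes p: "p \<in> MC C" and U: "U \<in> tangent_space (MC C) p"
  shows "tanMC p U"
proof -
  obtain U' V f v w where lp: "local_param4 (MC C) U' V f" and v: "v \<in> V" and fv: "f v = p"
    and Uw: "U = frechet_derivative f (at v) w"
    using U unfolding tangent_space_def by blast
  obtain x a where pxa: "p = (x, a)" by (cases p)
  have x: "onS2 x" using MC_onS2[OF p] by (simp add: pxa)
  have c1: "fst U $ 4 = 0"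
    using tan_constraint[OF lp v _ hd_fst_nth[of 4], of 0 w]
    by (auto simp: MC_def Uw)
  have c2: "fst U $ 5 = 0"
    using tan_constraint[OF lp v _ hd_fst_nth[of 5], of 0 w]
    by (auto simp: MC_def Uw)
  have d3: "((\<lambda>q. (fst q $ 1)\<^sup>2 + (fst q $ 2)\<^sup>2 + (fst q $ 3)\<^sup>2) has_derivative
      (\<lambda>H. 2 * (x$1 * fst H $ 1 + x$2 * fst H $ 2 + x$3 * fst H $ 3))) (at (f v))"
    unfolding fv pxa by (auto intro!: derivative_eq_intros simp: algebra_simps)
  have c3: "x$1 * fst U $ 1 + x$2 * fst U $ 2 + x$3 * fst U $ 3 = 0"
    using tan_constraint[OF lp v _ d3, of 1 w]
    by (auto simp: MC_def Uw)
  have d4: "((\<lambda>q. snd q $ 1 * fst q $ 1 + snd q $ 2 * fst q $ 2 - snd q $ 3 * fst q $ 3) has_derivative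
      (\<lambda>H. snd H$1 * x$1 + snd H$2 * x$2 - snd H$3 * x$3
     + a$1 * fst H$1 + a$2 * fst H$2 - a$3 * fst H$3)) (at (f v))"
    unfolding fv pxa by (auto intro!: derivative_eq_intros simp: algebra_simps)
  have c4: "snd U$1 * x$1 + snd U$2 * x$2 - snd U$3 * x$3
     + a$1 * fst U$1 + a$2 * fst U$2 - a$3 * fst U$3 = 0"
    using tan_constraint[OF lp v _ d4, of C w]
    by (auto simp: MC_def Uw)
  show ?thesis using c1 c2 c3 c4 by (simp add: tanMC_def tanS2_def pxa)
qed


lemma phi_MC:
  assumes "p \<in> MC C" "U \<in> tangent_space (MC C) p" "V \<in> tangent_space (MC C) p"
    "W \<in> tangent_space (MC C) p"
  shows "phi lam p U V W = 0"
  using phi_zero[OF MC_onS2[OF assms(1)] tangent_MC[OF assms(1,2)] tangent_MC[OF assms(1,3)]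
     tangent_MC[OF assms(1,4)]] .

lemma MC_chartdom: "MC C \<subseteq> chartdom"
proof
  fix p assume p: "p \<in> MC C"
  obtain x a where pxa: "p = (x, a)" by (cases p)
  have x: "onS2 x" using MC_onS2[OF p] by (simp add: pxa)
  have "norm x = sqrt (x \<bullet> x)" by (rule norm_eq_sqrt_inner)
  also have "x \<bullet> x = 1" using x by (simp add: inner5 onS2_def power2_eq_square)
  finally have "norm x = 1" by simp
  then show "p \<in> chartdom" using x by (simp add: chartdom_def pxa onS2_def)
qed

section \<open>Smoothness\<close>

inductive sm :: "(real^4 \<Rightarrow> real) \<Rightarrow> bool" where
  sm_const: "sm (\<lambda>x. c)"
| sm_var: "sm (\<lambda>x. x $ i)"
| sm_add: "sm f \<Longrightarrow> sm g \<Longrightarrow> sm (\<lambda>x. f x + g x)"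
| sm_mult: "sm f \<Longrightarrow> sm g \<Longrightarrow> sm (\<lambda>x. f x * g x)"
| sm_inv: "sm f \<Longrightarrow> (\<And>x. f x \<noteq> 0) \<Longrightarrow> sm (\<lambda>x. inverse (f x))"

lemma sm_minus: "sm f \<Longrightarrow> sm (\<lambda>x. - f x)"
  using sm_mult[OF sm_const[of "-1"]] by simp

lemma sm_diff: "sm f \<Longrightarrow> sm g \<Longrightarrow> sm (\<lambda>x. f x - g x)"
  using sm_add[OF _ sm_minus] by simp

lemma sm_power: "sm f \<Longrightarrow> sm (\<lambda>x. f x ^ n)"
proof (induction n)
  case 0 then show ?case using sm_const[of 1] by simp
next
  case (Suc n) then show ?case using sm_mult[OF Suc(2) Suc(1)] by simp
qed

lemma fd_works: "f differentiable (at x) \<Longrightarrow> (f has_derivative frechet_derivative f (at x)) (at x)"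
  by (rule frechet_derivative_works[THEN iffD1])

lemma sm_smooth:
  assumes "sm f"
  shows "(\<forall>x. f differentiable (at x)) \<and> (\<forall>v. sm (\<lambda>x. frechet_derivative f (at x) v))"
  using assms
proof (induction rule: sm.induct)
  case (sm_const c)
  have d: "((\<lambda>x::real^4. c) has_derivative (\<lambda>h. 0)) (at x)" for x by (rule has_derivative_const)
  have e: "frechet_derivative (\<lambda>x::real^4. c) (at x) = (\<lambda>h. 0)" for x
    by (rule sym[OF frechet_derivative_at[OF d]])
  show ?case unfolding e using sm.sm_const[of 0] differentiableI[OF d] by simp
next
  case (sm_var i)
  have d: "((\<lambda>x::real^4. x $ i) has_derivative (\<lambda>h. h $ i)) (at x)" for x by (rule has_derivative_vec_nth')
  have e: "frechet_derivative (\<lambda>x::real^4. x $ i) (at x) = (\<lambda>h. h $ i)" for x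
    by (rule sym[OF frechet_derivative_at[OF d]])
  show ?case unfolding e using sm.sm_const differentiableI[OF d] by simp
next
  case (sm_add f g)
  have df: "(f has_derivative frechet_derivative f (at x)) (at x)" for x
    using sm_add.IH fd_works by blast
  have dg: "(g has_derivative frechet_derivative g (at x)) (at x)" for x
    using sm_add.IH fd_works by blast
  have d: "((\<lambda>x. f x + g x) has_derivative (\<lambda>h. frechet_derivative f (at x) h + frechet_derivative g (at x) h)) (at x)" for x
    using has_derivative_add[OF df dg] .
  have e: "frechet_derivative (\<lambda>x. f x + g x) (at x) = (\<lambda>h. frechet_derivative f (at x) h + frechet_derivative g (at x) h)" for x
    by (rule sym[OF frechet_derivative_at[OF d]])
  have s: "sm (\<lambda>x. frechet_derivative f (at x) v + frechet_derivative g (at x) v)" for v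
    using sm_add.IH by (intro sm.sm_add) blast+
  show ?case unfolding e using s differentiableI[OF d] by simp
next
  case (sm_mult f g)
  have df: "(f has_derivative frechet_derivative f (at x)) (at x)" for x
    using sm_mult.IH fd_works by blast
  have dg: "(g has_derivative frechet_derivative g (at x)) (at x)" for x
    using sm_mult.IH fd_works by blast
  have d: "((\<lambda>x. f x * g x) has_derivative (\<lambda>h. f x * frechet_derivative g (at x) h + frechet_derivative f (at x) h * g x)) (at x)" for x
    using has_derivative_mult[OF df dg] .
  have e: "frechet_derivative (\<lambda>x. f x * g x) (at x) = (\<lambda>h. f x * frechet_derivative g (at x) h + frechet_derivative f (at x) h * g x)" for x
    by (rule sym[OF frechet_derivative_at[OF d]])
  have s: "sm (\<lambda>x. f x * frechet_derivative g (at x) v + frechet_derivative f (at x) v * g x)" for v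
    using sm_mult.IH sm_mult.hyps by (intro sm.sm_add sm.sm_mult) blast+
  show ?case unfolding e using s differentiableI[OF d] by simp
next
  case (sm_inv f)
  have df: "(f has_derivative frechet_derivative f (at x)) (at x)" for x
    using sm_inv.IH fd_works by blast
  have d: "((\<lambda>x. inverse (f x)) has_derivative (\<lambda>h. - (inverse (f x) * frechet_derivative f (at x) h * inverse (f x)))) (at x)" for x
    using Deriv.has_derivative_inverse[OF sm_inv.hyps(2) df] .
  have e: "frechet_derivative (\<lambda>x. inverse (f x)) (at x) = (\<lambda>h. - (inverse (f x) * frechet_derivative f (at x) h * inverse (f x)))" for x
    by (rule sym[OF frechet_derivative_at[OF d]])
  have i: "sm (\<lambda>x. inverse (f x))" by (rule sm.sm_inv[OF sm_inv.hyps])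
  have s: "sm (\<lambda>x. - (inverse (f x) * frechet_derivative f (at x) v * inverse (f x)))" for v
    using sm_inv.IH i by (intro sm_minus sm.sm_mult) blast+
  show ?case unfolding e using s differentiableI[OF d] by simp
qed

lemma hd_vec:
  fixes f :: "'a::real_normed_vector \<Rightarrow> real^'n"
  assumes "\<And>i. ((\<lambda>x. f x $ i) has_derivative (\<lambda>h. f' h $ i)) (at a)"
  shows "(f has_derivative f') (at a)"
proof -
  have "\<forall>b\<in>Basis. ((\<lambda>x. f x \<bullet> b) has_derivative (\<lambda>h. f' h \<bullet> b)) (at a within UNIV)"
  proof
    fix b :: "real^'n" assume "b \<in> Basis"
    then obtain i where b: "b = axis i 1" by (auto simp: Basis_vec_def)
    show "((\<lambda>x. f x \<bullet> b) has_derivative (\<lambda>h. f' h \<bullet> b)) (at a within UNIV)"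
      unfolding b inner_axis using assms[of i] by simp
  qed
  then show ?thesis using has_derivative_componentwise_within[of f f' a UNIV] by simp
qed

definition smv :: "(real^4 \<Rightarrow> bpt) \<Rightarrow> bool" where
  "smv F \<longleftrightarrow> (\<forall>i. sm (\<lambda>x. fst (F x) $ i)) \<and> (\<forall>i. sm (\<lambda>x. snd (F x) $ i))"

lemma smv_deriv:
  assumes "smv F"
  shows "(F has_derivative (\<lambda>h. (\<chi> i. frechet_derivative (\<lambda>x. fst (F x) $ i) (at a) h,
                                  \<chi> i. frechet_derivative (\<lambda>x. snd (F x) $ i) (at a) h))) (at a)"
proof -
  have s1: "sm (\<lambda>x. fst (F x) $ i)" for i using assms by (simp add: smv_def)
  have s2: "sm (\<lambda>x. snd (F x) $ i)" for i using assms by (simp add: smv_def)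
  have d1: "((\<lambda>x. fst (F x) $ i) has_derivative frechet_derivative (\<lambda>x. fst (F x) $ i) (at a)) (at a)" for i
    using fd_works[OF conjunct1[OF sm_smooth[OF s1], rule_format]] .
  have d2: "((\<lambda>x. snd (F x) $ i) has_derivative frechet_derivative (\<lambda>x. snd (F x) $ i) (at a)) (at a)" for i
    using fd_works[OF conjunct1[OF sm_smooth[OF s2], rule_format]] .
  have "((\<lambda>x. fst (F x)) has_derivative (\<lambda>h. \<chi> i. frechet_derivative (\<lambda>x. fst (F x) $ i) (at a) h)) (at a)"
    by (rule hd_vec) (simp add: d1)
  moreover have "((\<lambda>x. snd (F x)) has_derivative (\<lambda>h. \<chi> i. frechet_derivative (\<lambda>x. snd (F x) $ i) (at a) h)) (at a)"
    by (rule hd_vec) (simp add: d2)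
  ultimately have "((\<lambda>x. (fst (F x), snd (F x))) has_derivative (\<lambda>h. (\<chi> i. frechet_derivative (\<lambda>x. fst (F x) $ i) (at a) h,
                                  \<chi> i. frechet_derivative (\<lambda>x. snd (F x) $ i) (at a) h))) (at a)"
    by (rule has_derivative_Pair)
  then show ?thesis by simp
qed

lemma smv_step:
  assumes "smv F"
  shows "smv (\<lambda>x. frechet_derivative F (at x) v)"
proof -
  have e: "frechet_derivative F (at x) = (\<lambda>h. (\<chi> i. frechet_derivative (\<lambda>x. fst (F x) $ i) (at x) h,
                                  \<chi> i. frechet_derivative (\<lambda>x. snd (F x) $ i) (at x) h))" for x
    by (rule sym[OF frechet_derivative_at[OF smv_deriv[OF assms]]])
  show ?thesis unfolding smv_def e using assms sm_smooth unfolding smv_def by simp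
qed

lemma smv_Cinf:
  assumes "smv F"
  shows "Cinf_on S F"
proof -
  have "smv (iter_dd vs F)" for vs
  proof (induction vs)
    case Nil then show ?case using assms by simp
  next
    case (Cons v vs) then show ?case using smv_step by simp
  qed
  have "iter_dd vs F differentiable_on S" for vs
    unfolding differentiable_on_def
  proof
    fix x assume "x \<in> S"
    have "iter_dd vs F differentiable (at x)" by (rule differentiableI[OF smv_deriv[OF \<open>smv (iter_dd vs F)\<close>]])
    then show "iter_dd vs F differentiable (at x within S)" by (rule differentiable_at_withinI)
  qed
  then show ?thesis unfolding Cinf_on_def by (rule allI)
qed


definition qf :: "real \<Rightarrow> real \<Rightarrow> real" where "qf u1 u2 = 1 + u1\<^sup>2 + u2\<^sup>2"
definition Yv :: "real \<Rightarrow> real \<Rightarrow> real \<Rightarrow> real^3" where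
  "Yv e u1 u2 = vector [2 * u1, 2 * u2, e * (u1\<^sup>2 + u2\<^sup>2 - 1)]"
definition D1v :: "real \<Rightarrow> real \<Rightarrow> real \<Rightarrow> real^3" where
  "D1v e u1 u2 = vector [1 - u1\<^sup>2 + u2\<^sup>2, - 2 * u1 * u2, e * 2 * u1]"
definition D2v :: "real \<Rightarrow> real \<Rightarrow> real \<Rightarrow> real^3" where
  "D2v e u1 u2 = vector [- 2 * u1 * u2, 1 + u1\<^sup>2 - u2\<^sup>2, e * 2 * u2]"

lemma qf_pos: "qf u1 u2 > 0"
  unfolding qf_def by (simp add: add_pos_nonneg)

lemma frame_ids:
  assumes e: "e = 1 \<or> e = -1"
  shows "Yv e u1 u2 \<bullet> Yv e u1 u2 = (qf u1 u2)\<^sup>2" "D1v e u1 u2 \<bullet> D1v e u1 u2 = (qf u1 u2)\<^sup>2"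
    "D2v e u1 u2 \<bullet> D2v e u1 u2 = (qf u1 u2)\<^sup>2" "Yv e u1 u2 \<bullet> D1v e u1 u2 = 0"
    "Yv e u1 u2 \<bullet> D2v e u1 u2 = 0" "D1v e u1 u2 \<bullet> D2v e u1 u2 = 0"
  using e by (auto simp: inner3 Yv_def D1v_def D2v_def qf_def power2_eq_square algebra_simps)

lemma frame_complete:
  assumes e: "e = 1 \<or> e = -1"
  shows "(qf u1 u2)\<^sup>2 *\<^sub>R b = (b \<bullet> Yv e u1 u2) *\<^sub>R Yv e u1 u2 + (b \<bullet> D1v e u1 u2) *\<^sub>R D1v e u1 u2
     + (b \<bullet> D2v e u1 u2) *\<^sub>R D2v e u1 u2"
  using e by (auto simp: vec3_eq_iff inner3 Yv_def D1v_def D2v_def qf_def power2_eq_square algebra_simps)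

definition sg :: "real^3 \<Rightarrow> real^3" where "sg a = vector [a$1, a$2, - a$3]"
definition x3v :: "real^5 \<Rightarrow> real^3" where "x3v x = vector [x$1, x$2, x$3]"

definition fpar :: "real \<Rightarrow> real \<Rightarrow> real^4 \<Rightarrow> bpt" where
  "fpar e C w = (let X = (1 / qf (w$1) (w$2)) *\<^sub>R Yv e (w$1) (w$2);
     A = C *\<^sub>R X + w$3 *\<^sub>R D1v e (w$1) (w$2) + w$4 *\<^sub>R D2v e (w$1) (w$2)
   in (vector [X$1, X$2, X$3, 0, 0], sg A))"

definition gu1 :: "real \<Rightarrow> bpt \<Rightarrow> real" where "gu1 e p = fst p$1 / (1 - e * fst p$3)"
definition gu2 :: "real \<Rightarrow> bpt \<Rightarrow> real" where "gu2 e p = fst p$2 / (1 - e * fst p$3)"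
definition gt1 :: "real \<Rightarrow> bpt \<Rightarrow> real" where
  "gt1 e p = (sg (snd p) \<bullet> D1v e (gu1 e p) (gu2 e p)) / (qf (gu1 e p) (gu2 e p))\<^sup>2"
definition gt2 :: "real \<Rightarrow> bpt \<Rightarrow> real" where
  "gt2 e p = (sg (snd p) \<bullet> D2v e (gu1 e p) (gu2 e p)) / (qf (gu1 e p) (gu2 e p))\<^sup>2"
definition ginv :: "real \<Rightarrow> bpt \<Rightarrow> real^4" where
  "ginv e p = (\<chi> k. if k = 1 then gu1 e p else if k = 2 then gu2 e p else if k = 3 then gt1 e p else gt2 e p)"

lemma sg_sg [simp]: "sg (sg a) = a"
  by (simp add: sg_def vec3_eq_iff)

lemma fpar_split:
  "fst (fpar e C w) = vector [((1 / qf (w$1) (w$2)) *\<^sub>R Yv e (w$1) (w$2))$1,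
      ((1 / qf (w$1) (w$2)) *\<^sub>R Yv e (w$1) (w$2))$2, ((1 / qf (w$1) (w$2)) *\<^sub>R Yv e (w$1) (w$2))$3, 0, 0]"
  "x3v (fst (fpar e C w)) = (1 / qf (w$1) (w$2)) *\<^sub>R Yv e (w$1) (w$2)"
  "sg (snd (fpar e C w)) = C *\<^sub>R ((1 / qf (w$1) (w$2)) *\<^sub>R Yv e (w$1) (w$2)) + w$3 *\<^sub>R D1v e (w$1) (w$2) + w$4 *\<^sub>R D2v e (w$1) (w$2)"
  by (simp_all add: fpar_def Let_def x3v_def vec3_eq_iff)

lemma mem_MC: "p \<in> MC C \<longleftrightarrow> fst p$4 = 0 \<and> fst p$5 = 0 \<and>
   (fst p$1)\<^sup>2 + (fst p$2)\<^sup>2 + (fst p$3)\<^sup>2 = 1 \<and>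
   snd p$1 * fst p$1 + snd p$2 * fst p$2 - snd p$3 * fst p$3 = C"
  by (cases p) (simp add: MC_def)

lemma fpar_MC:
  assumes e: "e = 1 \<or> e = -1"
  shows "fpar e C w \<in> MC C" "e * fst (fpar e C w) $ 3 < 1"
proof -
  let ?q = "qf (w$1) (w$2)" and ?Y = "Yv e (w$1) (w$2)"
  let ?X = "(1 / ?q) *\<^sub>R ?Y"
  let ?A = "sg (snd (fpar e C w))"
  have q: "?q > 0" by (rule qf_pos)
  note ids = frame_ids[OF e, of "w$1" "w$2"]
  have XX: "?X \<bullet> ?X = 1" using ids q by (simp add: power2_eq_square)
  have XD1: "?X \<bullet> D1v e (w$1) (w$2) = 0" "?X \<bullet> D2v e (w$1) (w$2) = 0" using ids by simp_all
  have XD1': "D1v e (w$1) (w$2) \<bullet> ?X = 0" "D2v e (w$1) (w$2) \<bullet> ?X = 0"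
    using XD1 by (simp_all add: inner_commute)
  have AX: "?A \<bullet> ?X = C" unfolding fpar_split inner_add_left inner_scaleR_left XD1'
    using ids q by (simp add: power2_eq_square)
  have s1: "(fst (fpar e C w)$1)\<^sup>2 + (fst (fpar e C w)$2)\<^sup>2 + (fst (fpar e C w)$3)\<^sup>2 = ?X \<bullet> ?X"
    unfolding fpar_split by (simp add: inner3 power2_eq_square)
  have s2: "snd (fpar e C w)$1 * fst (fpar e C w)$1 + snd (fpar e C w)$2 * fst (fpar e C w)$2
     - snd (fpar e C w)$3 * fst (fpar e C w)$3 = ?A \<bullet> ?X"
    unfolding fpar_split(1) by (simp add: inner3 sg_def)
  show "fpar e C w \<in> MC C"
    unfolding mem_MC s1 s2 XX AX by (simp add: fpar_split(1))
  have "e * fst (fpar e C w) $ 3 = ((w$1)\<^sup>2 + (w$2)\<^sup>2 - 1) / ?q"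
    using e unfolding fpar_split by (auto simp: Yv_def)
  also have "\<dots> < 1" using q by (simp add: qf_def)
  finally show "e * fst (fpar e C w) $ 3 < 1" .
qed

lemma ginv_fpar:
  assumes e: "e = 1 \<or> e = -1"
  shows "gu1 e (fpar e C w) = w$1" "gu2 e (fpar e C w) = w$2"
    "gt1 e (fpar e C w) = w$3" "gt2 e (fpar e C w) = w$4" "ginv e (fpar e C w) = w"
proof -
  let ?q = "qf (w$1) (w$2)"
  have q: "?q > 0" by (rule qf_pos)
  have den: "1 - e * fst (fpar e C w)$3 = 2 / ?q"
    using e q by (auto simp: fpar_split Yv_def qf_def field_simps)
  show g1: "gu1 e (fpar e C w) = w$1"
    unfolding gu1_def den using q by (simp add: fpar_split Yv_def field_simps)
  show g2: "gu2 e (fpar e C w) = w$2"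
    unfolding gu2_def den using q by (simp add: fpar_split Yv_def field_simps)
  note ids = frame_ids[OF e, of "w$1" "w$2"]
  have i1: "D1v e (w$1) (w$2) \<bullet> Yv e (w$1) (w$2) = 0" "D2v e (w$1) (w$2) \<bullet> D1v e (w$1) (w$2) = 0"
    "D2v e (w$1) (w$2) \<bullet> Yv e (w$1) (w$2) = 0"
    using ids by (simp_all add: inner_commute)
  show g3: "gt1 e (fpar e C w) = w$3"
    unfolding gt1_def g1 g2 fpar_split inner_add_left inner_scaleR_left using ids i1 q by simp
  show g4: "gt2 e (fpar e C w) = w$4"
    unfolding gt2_def g1 g2 fpar_split inner_add_left inner_scaleR_left using ids i1 q by simp
  show "ginv e (fpar e C w) = w"
    unfolding ginv_def vec_eq_iff
  proof
    fix k :: 4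
    show "(\<chi> k. if k = 1 then gu1 e (fpar e C w) else if k = 2 then gu2 e (fpar e C w)
       else if k = 3 then gt1 e (fpar e C w) else gt2 e (fpar e C w)) $ k = w $ k"
      using exhaust_4[of k] g1 g2 g3 g4 by auto
  qed
qed

lemma ginv_nth [simp]: "ginv e p $ 1 = gu1 e p" "ginv e p $ 2 = gu2 e p" "ginv e p $ 3 = gt1 e p"
  "ginv e p $ 4 = gt2 e p"
  by (simp_all add: ginv_def)

lemma fpar_ginv:
  assumes e: "e = 1 \<or> e = -1" and p: "p \<in> MC C" and lt: "e * fst p $ 3 < 1"
  shows "fpar e C (ginv e p) = p"
proof -
  obtain x a where pxa: "p = (x, a)" by (cases p)
  have x4: "x$4 = 0" and x5: "x$5 = 0" and R: "(x$1)\<^sup>2 + (x$2)\<^sup>2 + (x$3)\<^sup>2 = 1"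
    and Ca: "a$1 * x$1 + a$2 * x$2 - a$3 * x$3 = C"
    using p by (simp_all add: mem_MC pxa)
  define d where "d = 1 - e * x$3"
  have d: "d > 0" using lt by (simp add: d_def pxa)
  let ?u1 = "gu1 e p" and ?u2 = "gu2 e p"
  have u1: "?u1 = x$1 / d" and u2: "?u2 = x$2 / d" by (simp_all add: gu1_def gu2_def pxa d_def)
  have x12: "(x$1)\<^sup>2 + (x$2)\<^sup>2 = d * (2 - d)"
    using R e by (auto simp: d_def algebra_simps power2_eq_square)
  have q: "qf ?u1 ?u2 = 2 / d"
  proof -
    have "qf ?u1 ?u2 = 1 + ((x$1)\<^sup>2 + (x$2)\<^sup>2) / d\<^sup>2"
      unfolding qf_def u1 u2 by (simp add: power_divide add_divide_distrib)
    also have "\<dots> = 2 / d" unfolding x12 using d by (simp add: field_simps power2_eq_square)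
    finally show ?thesis .
  qed
  have X: "(1 / qf ?u1 ?u2) *\<^sub>R Yv e ?u1 ?u2 = x3v x"
  proof -
    have "e * e = 1" using e by auto
    have 3: "d / 2 * (e * ((x$1 / d)\<^sup>2 + (x$2 / d)\<^sup>2 - 1)) = x$3"
    proof -
      have "(x$1 / d)\<^sup>2 + (x$2 / d)\<^sup>2 = ((x$1)\<^sup>2 + (x$2)\<^sup>2) / d\<^sup>2"
        by (simp add: power_divide add_divide_distrib)
      also have "\<dots> = (2 - d) / d" unfolding x12 using d by (simp add: power2_eq_square)
      finally have h: "(x$1 / d)\<^sup>2 + (x$2 / d)\<^sup>2 = (2 - d) / d" .
      have "d / 2 * (e * ((x$1 / d)\<^sup>2 + (x$2 / d)\<^sup>2 - 1)) = e * (1 - d)"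
        unfolding h using d by (simp add: field_simps)
      also have "\<dots> = x$3" using e by (auto simp: d_def)
      finally show ?thesis .
    qed
    show ?thesis unfolding q x3v_def vec3_eq_iff using d 3
      by (simp add: Yv_def u1 u2)
  qed
  have sgx: "sg a \<bullet> x3v x = C" using Ca by (simp add: inner3 sg_def x3v_def)
  have qp: "qf ?u1 ?u2 > 0" by (rule qf_pos)
  have A: "C *\<^sub>R ((1 / qf ?u1 ?u2) *\<^sub>R Yv e ?u1 ?u2) + gt1 e p *\<^sub>R D1v e ?u1 ?u2 + gt2 e p *\<^sub>R D2v e ?u1 ?u2 = sg a"
  proof -
    have C: "C = (sg a \<bullet> Yv e ?u1 ?u2) / qf ?u1 ?u2"
      using sgx X[symmetric] by (simp add: inner_scaleR_right)
    have "C *\<^sub>R ((1 / qf ?u1 ?u2) *\<^sub>R Yv e ?u1 ?u2) + gt1 e p *\<^sub>R D1v e ?u1 ?u2 + gt2 e p *\<^sub>R D2v e ?u1 ?u2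
      = (1 / (qf ?u1 ?u2)\<^sup>2) *\<^sub>R ((sg a \<bullet> Yv e ?u1 ?u2) *\<^sub>R Yv e ?u1 ?u2 + (sg a \<bullet> D1v e ?u1 ?u2) *\<^sub>R D1v e ?u1 ?u2
     + (sg a \<bullet> D2v e ?u1 ?u2) *\<^sub>R D2v e ?u1 ?u2)"
      unfolding C gt1_def gt2_def pxa snd_conv by (simp add: scaleR_add_right power2_eq_square)
    also have "\<dots> = (1 / (qf ?u1 ?u2)\<^sup>2) *\<^sub>R ((qf ?u1 ?u2)\<^sup>2 *\<^sub>R sg a)"
      unfolding frame_complete[OF e] ..
    also have "\<dots> = sg a" using qp by simp
    finally show ?thesis .
  qed
  have A': "C *\<^sub>R x3v x + gt1 e p *\<^sub>R D1v e ?u1 ?u2 + gt2 e p *\<^sub>R D2v e ?u1 ?u2 = sg a"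
    using A unfolding X .
  show ?thesis
    unfolding fpar_def Let_def ginv_nth X A' using x4 x5
    by (simp add: pxa x3v_def vec5_eq_iff)
qed

lemma sm_iq: "sm (\<lambda>w. inverse (qf (w$1) (w$2)))"
proof (rule sm_inv)
  show "sm (\<lambda>w. qf (w$1) (w$2))" unfolding qf_def by (intro sm_add sm_power sm_const sm_var)
  show "qf (x$1) (x$2) \<noteq> 0" for x :: "real^4" using qf_pos[of "x$1" "x$2"] by simp
qed

lemmas sm_rules = sm_iq sm_add sm_diff sm_minus sm_mult sm_power sm_var sm_const

lemma smv_fpar: "smv (fpar e C)"
  unfolding smv_def
proof (intro conjI allI)
  fix i :: 5
  show "sm (\<lambda>w. fst (fpar e C w) $ i)"
    using exhaust_5[of i]
    by (elim disjE) (simp_all add: fpar_def Let_def Yv_def divide_inverse del: inverse_eq_divide;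
       intro sm_rules)+
next
  fix i :: 3
  show "sm (\<lambda>w. snd (fpar e C w) $ i)"
    using exhaust_3[of i]
    by (elim disjE) (simp_all add: fpar_def Let_def Yv_def D1v_def D2v_def sg_def divide_inverse del: inverse_eq_divide;
       intro sm_rules)+
qed

lemma inj_deriv_left_inv:
  fixes f :: "real^4 \<Rightarrow> bpt"
  assumes df: "(f has_derivative f') (at w)"
    and g: "\<And>k. (g k has_derivative Dg k) (at (f w))" and gf: "\<And>k y. g k (f y) = y $ k"
  shows "inj f'"
proof -
  have e: "Dg k (f' h) = h $ k" for k h
  proof -
    have c: "((\<lambda>y. g k (f y)) has_derivative (\<lambda>h. Dg k (f' h))) (at w)"
      by (rule has_derivative_compose[OF df g])
    have "(\<lambda>y. g k (f y)) = (\<lambda>y. y $ k)" using gf by simp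
    then have c2: "((\<lambda>y. g k (f y)) has_derivative (\<lambda>h. h $ k)) (at w)"
      by (simp add: has_derivative_vec_nth')
    from has_derivative_unique[OF c c2] show ?thesis by (rule fun_cong)
  qed
  show ?thesis
  proof (rule injI)
    fix h1 h2 assume "f' h1 = f' h2"
    then have "h1 $ k = h2 $ k" for k using e[of k h1] e[of k h2] by simp
    then show "h1 = h2" by (simp add: vec_eq_iff)
  qed
qed

lemma diff_fst_nth [derivative_intros]: "(\<lambda>q::bpt. fst q $ i) differentiable F"
  by (rule differentiableI[OF hd_fst_nth])
lemma diff_snd_nth [derivative_intros]: "(\<lambda>q::bpt. snd q $ i) differentiable F"
  by (rule differentiableI[OF hd_snd_nth])

lemma gu_deriv:
  assumes "1 - e * fst p $ 3 \<noteq> 0"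
  shows "gu1 e differentiable (at p)" "gu2 e differentiable (at p)"
    "gt1 e differentiable (at p)" "gt2 e differentiable (at p)"
proof -
  have q: "qf a b \<noteq> 0" for a b using qf_pos[of a b] by simp
  have e1: "gu1 e = (\<lambda>p. fst p $ 1 / (1 - e * fst p $ 3))" by (simp add: gu1_def[abs_def])
  have e2: "gu2 e = (\<lambda>p. fst p $ 2 / (1 - e * fst p $ 3))" by (simp add: gu2_def[abs_def])
  show "gu1 e differentiable (at p)" unfolding e1 using assms by (intro derivative_intros) auto
  show "gu2 e differentiable (at p)" unfolding e2 using assms by (intro derivative_intros) auto
  show "gt1 e differentiable (at p)" unfolding gt1_def[abs_def] e1 e2 sg_def D1v_def inner3 vector_3
    using assms q unfolding qf_def by (intro derivative_intros) auto
  show "gt2 e differentiable (at p)" unfolding gt2_def[abs_def] e1 e2 sg_def D2v_def inner3 vector_3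
    using assms q unfolding qf_def by (intro derivative_intros) auto
qed

lemma ginv_cont:
  "continuous_on {p. 1 - e * fst p $ 3 \<noteq> 0} (ginv e)"
proof -
  let ?S = "{p::bpt. 1 - e * fst p $ 3 \<noteq> 0}"
  have q: "qf a b \<noteq> 0" for a b using qf_pos[of a b] by simp
  have e1: "gu1 e = (\<lambda>p. fst p $ 1 / (1 - e * fst p $ 3))" by (simp add: gu1_def[abs_def])
  have e2: "gu2 e = (\<lambda>p. fst p $ 2 / (1 - e * fst p $ 3))" by (simp add: gu2_def[abs_def])
  have c1: "continuous_on ?S (gu1 e)" unfolding e1 by (intro continuous_intros) auto
  have c2: "continuous_on ?S (gu2 e)" unfolding e2 by (intro continuous_intros) auto
  have c3: "continuous_on ?S (gt1 e)" unfolding gt1_def[abs_def] e1 e2 sg_def D1v_def inner3 vector_3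
    using q unfolding qf_def by (intro continuous_intros) auto
  have c4: "continuous_on ?S (gt2 e)" unfolding gt2_def[abs_def] e1 e2 sg_def D2v_def inner3 vector_3
    using q unfolding qf_def by (intro continuous_intros) auto
  have "continuous_on ?S (\<lambda>p. ginv e p $ k)" for k
  proof -
    consider "k = 1" | "k = 2" | "k = 3" | "k = 4" using exhaust_4[of k] by blast
    then show ?thesis using c1 c2 c3 c4 by cases (simp_all add: ginv_nth[abs_def])
  qed
  then have "continuous_on ?S (\<lambda>p. \<chi> k. ginv e p $ k)" by (rule continuous_on_vec_lambda)
  then show ?thesis by simp
qed


lemma local_param_fpar:
  assumes e: "e = 1 \<or> e = -1"
  shows "local_param4 (MC C) {p. e * fst p $ 3 < 1} UNIV (fpar e C)"
proof -
  let ?U = "{p::bpt. e * fst p $ 3 < 1}"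
  have oU: "open ?U"
    by (rule open_Collect_less) (intro continuous_intros)+
  have inj: "inj_on (fpar e C) UNIV"
    by (rule inj_on_inverseI[of _ "ginv e"]) (simp add: ginv_fpar[OF e])
  have im: "fpar e C ` UNIV = MC C \<inter> ?U"
  proof
    show "fpar e C ` UNIV \<subseteq> MC C \<inter> ?U" using fpar_MC[OF e] by auto
    show "MC C \<inter> ?U \<subseteq> fpar e C ` UNIV"
    proof
      fix p assume "p \<in> MC C \<inter> ?U"
      then have "fpar e C (ginv e p) = p" using fpar_ginv[OF e] by auto
      then show "p \<in> fpar e C ` UNIV" using rangeI[of "fpar e C" "ginv e p"] by simp
    qed
  qed
  have inv: "inv_into UNIV (fpar e C) p = ginv e p" if "p \<in> MC C \<inter> ?U" for p
    using that fpar_ginv[OF e] inv_into_f_eq[OF inj, of "ginv e p" p] by auto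
  have cont: "continuous_on (MC C \<inter> ?U) (inv_into UNIV (fpar e C))"
  proof -
    have "continuous_on (MC C \<inter> ?U) (ginv e)"
      by (rule continuous_on_subset[OF ginv_cont]) auto
    moreover have "continuous_on (MC C \<inter> ?U) (inv_into UNIV (fpar e C)) = continuous_on (MC C \<inter> ?U) (ginv e)"
      by (rule continuous_on_cong[OF refl inv])
    ultimately show ?thesis by simp
  qed
  have dinj: "inj (frechet_derivative (fpar e C) (at v))" for v
  proof (rule inj_deriv_left_inv[of _ _ v "\<lambda>k p. ginv e p $ k"])
    show "(fpar e C has_derivative frechet_derivative (fpar e C) (at v)) (at v)"
      by (rule fd_works[OF differentiableI[OF smv_deriv[OF smv_fpar]]])
    show "ginv e (fpar e C y) $ k = y $ k" for k y by (simp add: ginv_fpar[OF e])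
    have ne: "1 - e * fst (fpar e C v) $ 3 \<noteq> 0" using fpar_MC(2)[OF e, of C v] by simp
    have "(\<lambda>p. ginv e p $ k) differentiable (at (fpar e C v))" for k
    proof -
      consider "k = 1" | "k = 2" | "k = 3" | "k = 4" using exhaust_4[of k] by blast
      then show ?thesis using gu_deriv[OF ne] by cases (simp_all add: ginv_nth[abs_def])
    qed
    then show "((\<lambda>p. ginv e p $ k) has_derivative frechet_derivative (\<lambda>p. ginv e p $ k) (at (fpar e C v))) (at (fpar e C v))" for k
      by (rule fd_works)
  qed
  show ?thesis unfolding local_param4_def
    by (intro conjI oU open_UNIV smv_Cinf[OF smv_fpar] im inj cont ballI dinj)
qed


lemma submanifold_MC: "submanifold4 (MC C)"
  unfolding submanifold4_def
proof
  fix p assume p: "p \<in> MC C"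
  show "\<exists>U V f. p \<in> U \<and> local_param4 (MC C) U V f"
  proof (cases "fst p $ 3 < 1")
    case True
    then have "p \<in> {p. 1 * fst p $ 3 < 1}" by simp
    moreover have "local_param4 (MC C) {p. 1 * fst p $ 3 < 1} UNIV (fpar 1 C)"
      by (rule local_param_fpar) simp
    ultimately show ?thesis by (intro exI conjI)
  next
    case False
    then have "p \<in> {p. (-1) * fst p $ 3 < 1}" by simp
    moreover have "local_param4 (MC C) {p. (-1) * fst p $ 3 < 1} UNIV (fpar (-1) C)"
      by (rule local_param_fpar) simp
    ultimately show ?thesis by (intro exI conjI)
  qed
qed

lemma coassoc_MC: "coassociative lam (MC C)"
  unfolding coassociative_def
  by (intro conjI MC_chartdom submanifold_MC ballI phi_MC)


lemma cont_vector3 [continuous_intros]: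
  assumes "continuous_on S f1" "continuous_on S f2" "continuous_on S f3"
  shows "continuous_on S (\<lambda>z. vector [f1 z, f2 z, f3 z] :: real^3)"
proof -
  have e: "(\<lambda>z. vector [f1 z, f2 z, f3 z] :: real^3) = (\<lambda>z. \<chi> i. if i = 1 then f1 z else if i = 2 then f2 z else f3 z)"
    by (rule ext) (simp add: vec3_eq_iff)
  have "continuous_on S (\<lambda>z. if i = 1 then f1 z else if i = 2 then f2 z else f3 z)" for i :: 3
    using assms by (cases "i = 1"; cases "i = 2") simp_all
  then show ?thesis unfolding e by (rule continuous_on_vec_lambda)
qed

lemma cont_vector5 [continuous_intros]:
  assumes "continuous_on S f1" "continuous_on S f2" "continuous_on S f3" "continuous_on S f4" "continuous_on S f5"
  shows "continuous_on S (\<lambda>z. vector [f1 z, f2 z, f3 z, f4 z, f5 z] :: real^5)"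
proof -
  have e: "(\<lambda>z. vector [f1 z, f2 z, f3 z, f4 z, f5 z] :: real^5) = (\<lambda>z. \<chi> i. if i = 1 then f1 z else if i = 2 then f2 z else if i = 3 then f3 z else if i = 4 then f4 z else f5 z)"
    by (rule ext) (simp add: vec5_eq_iff)
  have "continuous_on S (\<lambda>z. if i = 1 then f1 z else if i = 2 then f2 z else if i = 3 then f3 z else if i = 4 then f4 z else f5 z)" for i :: 5
    using assms by (cases "i = 1"; cases "i = 2"; cases "i = 3"; cases "i = 4") simp_all
  then show ?thesis unfolding e by (rule continuous_on_vec_lambda)
qed

lemma norm3: "norm (v::real^3) = sqrt ((v$1)\<^sup>2 + (v$2)\<^sup>2 + (v$3)\<^sup>2)"
  by (simp add: norm_eq_sqrt_inner inner3 power2_eq_square)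

definition hmap :: "real \<Rightarrow> bpt \<Rightarrow> (real^3) \<times> (real^3)" where
  "hmap C z = (x3v (fst z), sg (snd z) - C *\<^sub>R x3v (fst z))"
definition kmap :: "real \<Rightarrow> (real^3) \<times> (real^3) \<Rightarrow> bpt" where
  "kmap C y = (vector [fst y $ 1, fst y $ 2, fst y $ 3, 0, 0], sg (snd y + C *\<^sub>R fst y))"

lemma kmap_MC:
  assumes y: "y \<in> TS2" shows "kmap C y \<in> MC C"
proof -
  obtain pp v where ypv: "y = (pp, v)" by (cases y)
  have n: "norm pp = 1" and o: "pp \<bullet> v = 0" using y by (simp_all add: TS2_def ypv)
  have R: "(pp$1)\<^sup>2 + (pp$2)\<^sup>2 + (pp$3)\<^sup>2 = 1" using n unfolding norm3
    by (metis real_sqrt_eq_1_iff)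
  have e: "snd (kmap C y) $ 1 * fst (kmap C y) $ 1 + snd (kmap C y) $ 2 * fst (kmap C y) $ 2
     - snd (kmap C y) $ 3 * fst (kmap C y) $ 3 = pp \<bullet> v + C * ((pp$1)\<^sup>2 + (pp$2)\<^sup>2 + (pp$3)\<^sup>2)"
    by (simp add: kmap_def ypv sg_def inner3 algebra_simps power2_eq_square)
  show ?thesis unfolding mem_MC e o R using R by (simp add: kmap_def ypv)
qed

lemma MC_homeo: "MC C homeomorphic TS2"
  unfolding homeomorphic_def
proof (intro exI)
  show "homeomorphism (MC C) TS2 (hmap C) (kmap C)"
    unfolding homeomorphism_def
  proof (intro conjI)
    show "\<forall>z\<in>MC C. kmap C (hmap C z) = z"
    proof
      fix z assume z: "z \<in> MC C"
      then show "kmap C (hmap C z) = z"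
        by (cases z) (simp add: kmap_def hmap_def mem_MC x3v_def sg_def vec5_eq_iff vec3_eq_iff)
    qed
    show "\<forall>y\<in>TS2. hmap C (kmap C y) = y"
    proof
      fix y assume y: "y \<in> TS2"
      then show "hmap C (kmap C y) = y"
        by (cases y) (simp add: kmap_def hmap_def x3v_def sg_def vec3_eq_iff)
    qed
    show "hmap C ` MC C = TS2"
    proof
      show "hmap C ` MC C \<subseteq> TS2"
      proof
        fix y assume "y \<in> hmap C ` MC C"
        then obtain z where z: "z \<in> MC C" and y: "y = hmap C z" by blast
        obtain x a where zxa: "z = (x, a)" by (cases z)
        have R: "(x$1)\<^sup>2 + (x$2)\<^sup>2 + (x$3)\<^sup>2 = 1" and Ca: "a$1 * x$1 + a$2 * x$2 - a$3 * x$3 = C"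
          using z by (simp_all add: mem_MC zxa)
        have "norm (x3v x) = 1" unfolding norm3 using R by (simp add: x3v_def)
        moreover have "x3v x \<bullet> (sg a - C *\<^sub>R x3v x) = 0"
        proof -
          have "x3v x \<bullet> (sg a - C *\<^sub>R x3v x) = (a$1 * x$1 + a$2 * x$2 - a$3 * x$3) - C * ((x$1)\<^sup>2 + (x$2)\<^sup>2 + (x$3)\<^sup>2)"
            by (simp add: inner3 x3v_def sg_def algebra_simps power2_eq_square)
          then show ?thesis unfolding R Ca by simp
        qed
        ultimately show "y \<in> TS2" by (simp add: TS2_def y hmap_def zxa)
      qed
      show "TS2 \<subseteq> hmap C ` MC C"
      proof
        fix y assume y: "y \<in> TS2"
        obtain pp v where ypv: "y = (pp, v)" by (cases y)
        have n: "norm pp = 1" and o: "pp \<bullet> v = 0" using y by (simp_all add: TS2_def ypv)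
        have R: "(pp$1)\<^sup>2 + (pp$2)\<^sup>2 + (pp$3)\<^sup>2 = 1" using n unfolding norm3
          by (metis real_sqrt_eq_1_iff)
        have "kmap C y \<in> MC C" using kmap_MC[OF y] .
        moreover have "hmap C (kmap C y) = y"
          by (simp add: kmap_def hmap_def x3v_def sg_def vec3_eq_iff ypv)
        ultimately show "y \<in> hmap C ` MC C" by (metis imageI)
      qed
    qed
    show "kmap C ` TS2 = MC C"
    proof
      show "kmap C ` TS2 \<subseteq> MC C"
      proof
        fix z assume "z \<in> kmap C ` TS2"
        then obtain y where y: "y \<in> TS2" and z: "z = kmap C y" by blast
        obtain pp v where ypv: "y = (pp, v)" by (cases y)
        have n: "norm pp = 1" and o: "pp \<bullet> v = 0" using y by (simp_all add: TS2_def ypv)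
        have R: "(pp$1)\<^sup>2 + (pp$2)\<^sup>2 + (pp$3)\<^sup>2 = 1" using n unfolding norm3
          by (metis real_sqrt_eq_1_iff)
        show "z \<in> MC C" unfolding z by (rule kmap_MC[OF y])
      qed
      show "MC C \<subseteq> kmap C ` TS2"
      proof
        fix z assume z: "z \<in> MC C"
        obtain x a where zxa: "z = (x, a)" by (cases z)
        have R: "(x$1)\<^sup>2 + (x$2)\<^sup>2 + (x$3)\<^sup>2 = 1" and Ca: "a$1 * x$1 + a$2 * x$2 - a$3 * x$3 = C"
          using z by (simp_all add: mem_MC zxa)
        have "norm (x3v x) = 1" unfolding norm3 using R by (simp add: x3v_def)
        moreover have "x3v x \<bullet> (sg a - C *\<^sub>R x3v x) = 0"
        proof -
          have "x3v x \<bullet> (sg a - C *\<^sub>R x3v x) = (a$1 * x$1 + a$2 * x$2 - a$3 * x$3) - C * ((x$1)\<^sup>2 + (x$2)\<^sup>2 + (x$3)\<^sup>2)"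
            by (simp add: inner3 x3v_def sg_def algebra_simps power2_eq_square)
          then show ?thesis unfolding R Ca by simp
        qed
        ultimately have "hmap C z \<in> TS2" by (simp add: TS2_def hmap_def zxa)
        moreover have "kmap C (hmap C z) = z"
          using z by (cases z) (simp add: kmap_def hmap_def mem_MC x3v_def sg_def vec5_eq_iff vec3_eq_iff)
        ultimately show "z \<in> kmap C ` TS2" by (metis imageI)
      qed
    qed
    show "continuous_on (MC C) (hmap C)"
      unfolding hmap_def[abs_def] x3v_def sg_def by (intro continuous_intros)
    show "continuous_on TS2 (kmap C)"
      unfolding kmap_def[abs_def] sg_def by (intro continuous_intros)
  qed
qed

definition e1v :: "real^5" where "e1v = vector [1, 0, 0, 0, 0]"

lemma e1v_nth [simp]: "e1v $ 1 = 1" "e1v $ 2 = 0" "e1v $ 3 = 0" "e1v $ 4 = 0" "e1v $ 5 = 0"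
  by (simp_all add: e1v_def)

lemma blk_e1: "blk A B *v e1v = vector [A$1$1, A$2$1, A$3$1, 0, 0]"
  by (simp add: vec5_eq_iff matrix_vector_mult_def sum_5 blk_def e1v_def)

lemma blkT_mv: "u v* blk A B = vector [A$1$1 * u$1 + A$2$1 * u$2 + A$3$1 * u$3,
   A$1$2 * u$1 + A$2$2 * u$2 + A$3$2 * u$3, A$1$3 * u$1 + A$2$3 * u$2 + A$3$3 * u$3,
   B$1$1 * u$4 + B$2$1 * u$5, B$1$2 * u$4 + B$2$2 * u$5]"
  by (simp add: vec5_eq_iff vector_matrix_mult_def sum_5 blk_def)

lemma act_formula:
  assumes R: "(A$1$1)\<^sup>2 + (A$2$1)\<^sup>2 + (A$3$1)\<^sup>2 = 1"
  shows
    "snd (act (blk A B) (e1v, a)) $ 1 = - 1/2*(A$1$1)*(A$1$2)*(A$2$1)*(A$3$3)*(a$1) + 1/2*(A$1$1)*(A$1$2)*(A$2$3)*(A$3$1)*(a$1) + 1/2*(A$1$1)*(A$1$3)*(A$2$1)*(A$3$2)*(a$1) - 1/2*(A$1$1)*(A$1$3)*(A$2$2)*(A$3$1)*(a$1) - 1/2*(A$1$1)*(A$2$1)*(A$2$2)*(B$1$1)*(a$2) - 1/2*(A$1$1)*(A$2$1)*(A$2$2)*(B$1$2)*(a$3) + 1/2*(A$1$1)*(A$2$1)*(A$2$3)*(B$1$1)*(a$3) - 1/2*(A$1$1)*(A$2$1)*(A$2$3)*(B$1$2)*(a$2) - 1/2*(A$1$1)*(A$3$1)*(A$3$2)*(B$1$1)*(a$2)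 - 1/2*(A$1$1)*(A$3$1)*(A$3$2)*(B$1$2)*(a$3) + 1/2*(A$1$1)*(A$3$1)*(A$3$3)*(B$1$1)*(a$3) - 1/2*(A$1$1)*(A$3$1)*(A$3$3)*(B$1$2)*(a$2) + 1/2*(A$1$1)*(B$1$1)*(B$2$2)*(a$1) - 1/2*(A$1$1)*(B$1$2)*(B$2$1)*(a$1) + 1/2*(A$1$1)^2*(A$2$2)*(A$3$3)*(a$1) - 1/2*(A$1$1)^2*(A$2$3)*(A$3$2)*(a$1) + 1/2*(A$1$2)*(A$2$1)^2*(B$1$1)*(a$2) + 1/2*(A$1$2)*(A$2$1)^2*(B$1$2)*(a$3) + 1/2*(A$1$2)*(A$3$1)^2*(B$1$1)*(a$2) + 1/2*(A$1$2)*(A$3$1)^2*(B$1$2)*(a$3) - 1/2*(A$1$3)*(A$2$1)^2*(B$1$1)*(a$3) + 1/2*(A$1$3)*(A$2$1)^2*(B$1$2)*(a$2) - 1/2*(A$1$3)*(A$3$1)^2*(B$1$1)*(a$3) + 1/2*(A$1$3)*(A$3$1)^2*(B$1$2)*(a$2) - 1/2*(A$2$1)*(A$3$2)*(B$2$1)*(a$2) - 1/2*(A$2$1)*(A$3$2)*(B$2$2)*(a$3) + 1/2*(A$2$1)*(A$3$3)*(B$2$1)*(a$3) - 1/2*(A$2$1)*(A$3$3)*(B$2$2)*(a$2) + 1/2*(A$2$2)*(A$3$1)*(B$2$1)*(a$2) + 1/2*(A$2$2)*(A$3$1)*(B$2$2)*(a$3) - 1/2*(A$2$3)*(A$3$1)*(B$2$1)*(a$3)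 + 1/2*(A$2$3)*(A$3$1)*(B$2$2)*(a$2)"
    "snd (act (blk A B) (e1v, a)) $ 2 = - 1/2*(A$1$1)*(A$1$2)*(A$2$1)*(B$1$1)*(a$2) - 1/2*(A$1$1)*(A$1$2)*(A$2$1)*(B$1$2)*(a$3) + 1/2*(A$1$1)*(A$1$3)*(A$2$1)*(B$1$1)*(a$3) - 1/2*(A$1$1)*(A$1$3)*(A$2$1)*(B$1$2)*(a$2) + 1/2*(A$1$1)*(A$2$1)*(A$2$2)*(A$3$3)*(a$1) - 1/2*(A$1$1)*(A$2$1)*(A$2$3)*(A$3$2)*(a$1) + 1/2*(A$1$1)*(A$3$2)*(B$2$1)*(a$2) + 1/2*(A$1$1)*(A$3$2)*(B$2$2)*(a$3) - 1/2*(A$1$1)*(A$3$3)*(B$2$1)*(a$3) + 1/2*(A$1$1)*(A$3$3)*(B$2$2)*(a$2) + 1/2*(A$1$1)^2*(A$2$2)*(B$1$1)*(a$2) + 1/2*(A$1$1)^2*(A$2$2)*(B$1$2)*(a$3) - 1/2*(A$1$1)^2*(A$2$3)*(B$1$1)*(a$3) + 1/2*(A$1$1)^2*(A$2$3)*(B$1$2)*(a$2) + 1/2*(A$1$2)*(A$2$1)*(A$2$3)*(A$3$1)*(a$1) - 1/2*(A$1$2)*(A$2$1)^2*(A$3$3)*(a$1) - 1/2*(A$1$2)*(A$3$1)*(B$2$1)*(a$2) - 1/2*(A$1$2)*(A$3$1)*(B$2$2)*(a$3) - 1/2*(A$1$3)*(A$2$1)*(A$2$2)*(A$3$1)*(a$1)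 + 1/2*(A$1$3)*(A$2$1)^2*(A$3$2)*(a$1) + 1/2*(A$1$3)*(A$3$1)*(B$2$1)*(a$3) - 1/2*(A$1$3)*(A$3$1)*(B$2$2)*(a$2) - 1/2*(A$2$1)*(A$3$1)*(A$3$2)*(B$1$1)*(a$2) - 1/2*(A$2$1)*(A$3$1)*(A$3$2)*(B$1$2)*(a$3) + 1/2*(A$2$1)*(A$3$1)*(A$3$3)*(B$1$1)*(a$3) - 1/2*(A$2$1)*(A$3$1)*(A$3$3)*(B$1$2)*(a$2) + 1/2*(A$2$1)*(B$1$1)*(B$2$2)*(a$1) - 1/2*(A$2$1)*(B$1$2)*(B$2$1)*(a$1) + 1/2*(A$2$2)*(A$3$1)^2*(B$1$1)*(a$2) + 1/2*(A$2$2)*(A$3$1)^2*(B$1$2)*(a$3) - 1/2*(A$2$3)*(A$3$1)^2*(B$1$1)*(a$3) + 1/2*(A$2$3)*(A$3$1)^2*(B$1$2)*(a$2)"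
    "snd (act (blk A B) (e1v, a)) $ 3 = 1/2*(A$1$1)*(A$1$2)*(A$3$1)*(B$1$1)*(a$2) + 1/2*(A$1$1)*(A$1$2)*(A$3$1)*(B$1$2)*(a$3) - 1/2*(A$1$1)*(A$1$3)*(A$3$1)*(B$1$1)*(a$3) + 1/2*(A$1$1)*(A$1$3)*(A$3$1)*(B$1$2)*(a$2) - 1/2*(A$1$1)*(A$2$2)*(A$3$1)*(A$3$3)*(a$1) + 1/2*(A$1$1)*(A$2$2)*(B$2$1)*(a$2) + 1/2*(A$1$1)*(A$2$2)*(B$2$2)*(a$3) + 1/2*(A$1$1)*(A$2$3)*(A$3$1)*(A$3$2)*(a$1) - 1/2*(A$1$1)*(A$2$3)*(B$2$1)*(a$3) + 1/2*(A$1$1)*(A$2$3)*(B$2$2)*(a$2) - 1/2*(A$1$1)^2*(A$3$2)*(B$1$1)*(a$2) - 1/2*(A$1$1)^2*(A$3$2)*(B$1$2)*(a$3) + 1/2*(A$1$1)^2*(A$3$3)*(B$1$1)*(a$3) - 1/2*(A$1$1)^2*(A$3$3)*(B$1$2)*(a$2) + 1/2*(A$1$2)*(A$2$1)*(A$3$1)*(A$3$3)*(a$1) - 1/2*(A$1$2)*(A$2$1)*(B$2$1)*(a$2) - 1/2*(A$1$2)*(A$2$1)*(B$2$2)*(a$3) - 1/2*(A$1$2)*(A$2$3)*(A$3$1)^2*(a$1) - 1/2*(A$1$3)*(A$2$1)*(A$3$1)*(A$3$2)*(a$1) + 1/2*(A$1$3)*(A$2$1)*(B$2$1)*(a$3)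 - 1/2*(A$1$3)*(A$2$1)*(B$2$2)*(a$2) + 1/2*(A$1$3)*(A$2$2)*(A$3$1)^2*(a$1) + 1/2*(A$2$1)*(A$2$2)*(A$3$1)*(B$1$1)*(a$2) + 1/2*(A$2$1)*(A$2$2)*(A$3$1)*(B$1$2)*(a$3) - 1/2*(A$2$1)*(A$2$3)*(A$3$1)*(B$1$1)*(a$3) + 1/2*(A$2$1)*(A$2$3)*(A$3$1)*(B$1$2)*(a$2) - 1/2*(A$2$1)^2*(A$3$2)*(B$1$1)*(a$2) - 1/2*(A$2$1)^2*(A$3$2)*(B$1$2)*(a$3) + 1/2*(A$2$1)^2*(A$3$3)*(B$1$1)*(a$3) - 1/2*(A$2$1)^2*(A$3$3)*(B$1$2)*(a$2) - 1/2*(A$3$1)*(B$1$1)*(B$2$2)*(a$1) + 1/2*(A$3$1)*(B$1$2)*(B$2$1)*(a$1)"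
proof -
  let ?y = "vector [A$1$1, A$2$1, A$3$1, 0, 0] :: real^5"
  have y: "onS2 ?y" using R by (simp add: onS2_def)
  have e15: "e1v $ 5 = 0" by (simp add: e1v_def)
  have y5: "?y $ 5 = 0" by simp
  note simps = act_def blk_e1 form_inner_omega[OF y] omega_def e2_def cof_x50[OF e15] frame_x50[OF y5]
    blkT_mv sum_3
  show "snd (act (blk A B) (e1v, a)) $ 1 = - 1/2*(A$1$1)*(A$1$2)*(A$2$1)*(A$3$3)*(a$1) + 1/2*(A$1$1)*(A$1$2)*(A$2$3)*(A$3$1)*(a$1) + 1/2*(A$1$1)*(A$1$3)*(A$2$1)*(A$3$2)*(a$1) - 1/2*(A$1$1)*(A$1$3)*(A$2$2)*(A$3$1)*(a$1) - 1/2*(A$1$1)*(A$2$1)*(A$2$2)*(B$1$1)*(a$2) - 1/2*(A$1$1)*(A$2$1)*(A$2$2)*(B$1$2)*(a$3) + 1/2*(A$1$1)*(A$2$1)*(A$2$3)*(B$1$1)*(a$3) - 1/2*(A$1$1)*(A$2$1)*(A$2$3)*(B$1$2)*(a$2) - 1/2*(A$1$1)*(A$3$1)*(A$3$2)*(B$1$1)*(a$2) - 1/2*(A$1$1)*(A$3$1)*(A$3$2)*(B$1$2)*(a$3) + 1/2*(A$1$1)*(A$3$1)*(A$3$3)*(B$1$1)*(a$3) - 1/2*(A$1$1)*(A$3$1)*(A$3$3)*(B$1$2)*(a$2) + 1/2*(A$1$1)*(B$1$1)*(B$2$2)*(a$1) - 1/2*(A$1$1)*(B$1$2)*(B$2$1)*(a$1)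 + 1/2*(A$1$1)^2*(A$2$2)*(A$3$3)*(a$1) - 1/2*(A$1$1)^2*(A$2$3)*(A$3$2)*(a$1) + 1/2*(A$1$2)*(A$2$1)^2*(B$1$1)*(a$2) + 1/2*(A$1$2)*(A$2$1)^2*(B$1$2)*(a$3) + 1/2*(A$1$2)*(A$3$1)^2*(B$1$1)*(a$2) + 1/2*(A$1$2)*(A$3$1)^2*(B$1$2)*(a$3) - 1/2*(A$1$3)*(A$2$1)^2*(B$1$1)*(a$3) + 1/2*(A$1$3)*(A$2$1)^2*(B$1$2)*(a$2) - 1/2*(A$1$3)*(A$3$1)^2*(B$1$1)*(a$3) + 1/2*(A$1$3)*(A$3$1)^2*(B$1$2)*(a$2) - 1/2*(A$2$1)*(A$3$2)*(B$2$1)*(a$2) - 1/2*(A$2$1)*(A$3$2)*(B$2$2)*(a$3) + 1/2*(A$2$1)*(A$3$3)*(B$2$1)*(a$3) - 1/2*(A$2$1)*(A$3$3)*(B$2$2)*(a$2) + 1/2*(A$2$2)*(A$3$1)*(B$2$1)*(a$2) + 1/2*(A$2$2)*(A$3$1)*(B$2$2)*(a$3) - 1/2*(A$2$3)*(A$3$1)*(B$2$1)*(a$3) + 1/2*(A$2$3)*(A$3$1)*(B$2$2)*(a$2)"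
    "snd (act (blk A B) (e1v, a)) $ 2 = - 1/2*(A$1$1)*(A$1$2)*(A$2$1)*(B$1$1)*(a$2) - 1/2*(A$1$1)*(A$1$2)*(A$2$1)*(B$1$2)*(a$3) + 1/2*(A$1$1)*(A$1$3)*(A$2$1)*(B$1$1)*(a$3) - 1/2*(A$1$1)*(A$1$3)*(A$2$1)*(B$1$2)*(a$2) + 1/2*(A$1$1)*(A$2$1)*(A$2$2)*(A$3$3)*(a$1) - 1/2*(A$1$1)*(A$2$1)*(A$2$3)*(A$3$2)*(a$1) + 1/2*(A$1$1)*(A$3$2)*(B$2$1)*(a$2) + 1/2*(A$1$1)*(A$3$2)*(B$2$2)*(a$3) - 1/2*(A$1$1)*(A$3$3)*(B$2$1)*(a$3) + 1/2*(A$1$1)*(A$3$3)*(B$2$2)*(a$2) + 1/2*(A$1$1)^2*(A$2$2)*(B$1$1)*(a$2) + 1/2*(A$1$1)^2*(A$2$2)*(B$1$2)*(a$3) - 1/2*(A$1$1)^2*(A$2$3)*(B$1$1)*(a$3) + 1/2*(A$1$1)^2*(A$2$3)*(B$1$2)*(a$2) + 1/2*(A$1$2)*(A$2$1)*(A$2$3)*(A$3$1)*(a$1) - 1/2*(A$1$2)*(A$2$1)^2*(A$3$3)*(a$1) - 1/2*(A$1$2)*(A$3$1)*(B$2$1)*(a$2) - 1/2*(A$1$2)*(A$3$1)*(B$2$2)*(a$3) - 1/2*(A$1$3)*(A$2$1)*(A$2$2)*(A$3$1)*(a$1) + 1/2*(A$1$3)*(A$2$1)^2*(A$3$2)*(a$1)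 + 1/2*(A$1$3)*(A$3$1)*(B$2$1)*(a$3) - 1/2*(A$1$3)*(A$3$1)*(B$2$2)*(a$2) - 1/2*(A$2$1)*(A$3$1)*(A$3$2)*(B$1$1)*(a$2) - 1/2*(A$2$1)*(A$3$1)*(A$3$2)*(B$1$2)*(a$3) + 1/2*(A$2$1)*(A$3$1)*(A$3$3)*(B$1$1)*(a$3) - 1/2*(A$2$1)*(A$3$1)*(A$3$3)*(B$1$2)*(a$2) + 1/2*(A$2$1)*(B$1$1)*(B$2$2)*(a$1) - 1/2*(A$2$1)*(B$1$2)*(B$2$1)*(a$1) + 1/2*(A$2$2)*(A$3$1)^2*(B$1$1)*(a$2) + 1/2*(A$2$2)*(A$3$1)^2*(B$1$2)*(a$3) - 1/2*(A$2$3)*(A$3$1)^2*(B$1$1)*(a$3) + 1/2*(A$2$3)*(A$3$1)^2*(B$1$2)*(a$2)"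
    "snd (act (blk A B) (e1v, a)) $ 3 = 1/2*(A$1$1)*(A$1$2)*(A$3$1)*(B$1$1)*(a$2) + 1/2*(A$1$1)*(A$1$2)*(A$3$1)*(B$1$2)*(a$3) - 1/2*(A$1$1)*(A$1$3)*(A$3$1)*(B$1$1)*(a$3) + 1/2*(A$1$1)*(A$1$3)*(A$3$1)*(B$1$2)*(a$2) - 1/2*(A$1$1)*(A$2$2)*(A$3$1)*(A$3$3)*(a$1) + 1/2*(A$1$1)*(A$2$2)*(B$2$1)*(a$2) + 1/2*(A$1$1)*(A$2$2)*(B$2$2)*(a$3) + 1/2*(A$1$1)*(A$2$3)*(A$3$1)*(A$3$2)*(a$1) - 1/2*(A$1$1)*(A$2$3)*(B$2$1)*(a$3) + 1/2*(A$1$1)*(A$2$3)*(B$2$2)*(a$2) - 1/2*(A$1$1)^2*(A$3$2)*(B$1$1)*(a$2) - 1/2*(A$1$1)^2*(A$3$2)*(B$1$2)*(a$3) + 1/2*(A$1$1)^2*(A$3$3)*(B$1$1)*(a$3) - 1/2*(A$1$1)^2*(A$3$3)*(B$1$2)*(a$2) + 1/2*(A$1$2)*(A$2$1)*(A$3$1)*(A$3$3)*(a$1) - 1/2*(A$1$2)*(A$2$1)*(B$2$1)*(a$2) - 1/2*(A$1$2)*(A$2$1)*(B$2$2)*(a$3) - 1/2*(A$1$2)*(A$2$3)*(A$3$1)^2*(a$1) - 1/2*(A$1$3)*(A$2$1)*(A$3$1)*(A$3$2)*(a$1) + 1/2*(A$1$3)*(A$2$1)*(B$2$1)*(a$3)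 - 1/2*(A$1$3)*(A$2$1)*(B$2$2)*(a$2) + 1/2*(A$1$3)*(A$2$2)*(A$3$1)^2*(a$1) + 1/2*(A$2$1)*(A$2$2)*(A$3$1)*(B$1$1)*(a$2) + 1/2*(A$2$1)*(A$2$2)*(A$3$1)*(B$1$2)*(a$3) - 1/2*(A$2$1)*(A$2$3)*(A$3$1)*(B$1$1)*(a$3) + 1/2*(A$2$1)*(A$2$3)*(A$3$1)*(B$1$2)*(a$2) - 1/2*(A$2$1)^2*(A$3$2)*(B$1$1)*(a$2) - 1/2*(A$2$1)^2*(A$3$2)*(B$1$2)*(a$3) + 1/2*(A$2$1)^2*(A$3$3)*(B$1$1)*(a$3) - 1/2*(A$2$1)^2*(A$3$3)*(B$1$2)*(a$2) - 1/2*(A$3$1)*(B$1$1)*(B$2$2)*(a$1) + 1/2*(A$3$1)*(B$1$2)*(B$2$1)*(a$1)"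
    by (simp_all add: simps field_simps power2_eq_square)
qed

lemma SO3_rel:
  fixes A :: "real^3^3"
  assumes "A \<in> SOm"
  shows "(A$1$1)\<^sup>2 + (A$2$1)\<^sup>2 + (A$3$1)\<^sup>2 = 1"
    "A$1$1 * A$1$2 + A$2$1 * A$2$2 + A$3$1 * A$3$2 = 0"
    "A$1$1 * A$2$2 * A$3$3 + A$1$2 * A$2$3 * A$3$1 + A$1$3 * A$2$1 * A$3$2
     - A$1$1 * A$2$3 * A$3$2 - A$1$2 * A$2$1 * A$3$3 - A$1$3 * A$2$2 * A$3$1 = 1"
    "A$2$3 * A$3$1 - A$2$1 * A$3$3 = A$1$2"
    "A$1$1 * A$3$3 - A$1$3 * A$3$1 = A$2$2"
    "A$1$3 * A$2$1 - A$1$1 * A$2$3 = A$3$2"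
proof -
  have o: "transpose A ** A = mat 1" and d: "det A = 1"
    using assms by (simp_all add: SOm_def orthogonal_matrix_def)
  have m: "(transpose A ** A) $ i $ j = (mat 1 :: real^3^3) $ i $ j" for i j using o by simp
  have mm: "(transpose A ** A) $ i $ j = A$1$i * A$1$j + A$2$i * A$2$j + A$3$i * A$3$j" for i j
    by (simp add: matrix_matrix_mult_def transpose_def sum_3)
  have n1: "(A$1$1)\<^sup>2 + (A$2$1)\<^sup>2 + (A$3$1)\<^sup>2 = 1" using m[of 1 1] mm[of 1 1] by (simp add: mat_def power2_eq_square)
  have n2: "(A$1$2)\<^sup>2 + (A$2$2)\<^sup>2 + (A$3$2)\<^sup>2 = 1" using m[of 2 2] mm[of 2 2] by (simp add: mat_def power2_eq_square)
  have n3: "(A$1$3)\<^sup>2 + (A$2$3)\<^sup>2 + (A$3$3)\<^sup>2 = 1" using m[of 3 3] mm[of 3 3] by (simp add: mat_def power2_eq_square)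
  have o12: "A$1$1 * A$1$2 + A$2$1 * A$2$2 + A$3$1 * A$3$2 = 0" using m[of 1 2] mm[of 1 2] by (simp add: mat_def)
  have o13: "A$1$1 * A$1$3 + A$2$1 * A$2$3 + A$3$1 * A$3$3 = 0" using m[of 1 3] mm[of 1 3] by (simp add: mat_def)
  have dd: "A$1$1 * A$2$2 * A$3$3 + A$1$2 * A$2$3 * A$3$1 + A$1$3 * A$2$1 * A$3$2
     - A$1$1 * A$2$3 * A$3$2 - A$1$2 * A$2$1 * A$3$3 - A$1$3 * A$2$2 * A$3$1 = 1"
    using d by (simp add: det_3)
  define w1 where "w1 = A$2$3 * A$3$1 - A$2$1 * A$3$3 - A$1$2"
  define w2 where "w2 = A$1$1 * A$3$3 - A$1$3 * A$3$1 - A$2$2"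
  define w3 where "w3 = A$1$3 * A$2$1 - A$1$1 * A$2$3 - A$3$2"
  have "w1\<^sup>2 + w2\<^sup>2 + w3\<^sup>2 = ((A$1$3)\<^sup>2 + (A$2$3)\<^sup>2 + (A$3$3)\<^sup>2) * ((A$1$1)\<^sup>2 + (A$2$1)\<^sup>2 + (A$3$1)\<^sup>2)
     - (A$1$1 * A$1$3 + A$2$1 * A$2$3 + A$3$1 * A$3$3)\<^sup>2
     - 2 * (A$1$1 * A$2$2 * A$3$3 + A$1$2 * A$2$3 * A$3$1 + A$1$3 * A$2$1 * A$3$2
     - A$1$1 * A$2$3 * A$3$2 - A$1$2 * A$2$1 * A$3$3 - A$1$3 * A$2$2 * A$3$1)
     + ((A$1$2)\<^sup>2 + (A$2$2)\<^sup>2 + (A$3$2)\<^sup>2)"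
    unfolding w1_def w2_def w3_def by (simp add: power2_eq_square algebra_simps)
  also have "\<dots> = 0" unfolding n1 n2 n3 o13 dd by simp
  finally have s0: "w1\<^sup>2 + w2\<^sup>2 + w3\<^sup>2 = 0" .
  have "w1\<^sup>2 = 0" "w2\<^sup>2 = 0" "w3\<^sup>2 = 0"
    using s0 zero_le_power2[of w1] zero_le_power2[of w2] zero_le_power2[of w3] by linarith+
  then have "w1 = 0" "w2 = 0" "w3 = 0" by simp_all
  then show "A$2$3 * A$3$1 - A$2$1 * A$3$3 = A$1$2"
    "A$1$1 * A$3$3 - A$1$3 * A$3$1 = A$2$2"
    "A$1$3 * A$2$1 - A$1$1 * A$2$3 = A$3$2"
    unfolding w1_def w2_def w3_def by simp_all
  show "(A$1$1)\<^sup>2 + (A$2$1)\<^sup>2 + (A$3$1)\<^sup>2 = 1" by (rule n1)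
  show "A$1$1 * A$1$2 + A$2$1 * A$2$2 + A$3$1 * A$3$2 = 0" by (rule o12)
  show "A$1$1 * A$2$2 * A$3$3 + A$1$2 * A$2$3 * A$3$1 + A$1$3 * A$2$1 * A$3$2
     - A$1$1 * A$2$3 * A$3$2 - A$1$2 * A$2$1 * A$3$3 - A$1$3 * A$2$2 * A$3$1 = 1" by (rule dd)
qed

lemma SO2_rel:
  fixes B :: "real^2^2"
  assumes "B \<in> SOm"
  shows "B$1$1 * B$2$2 - B$1$2 * B$2$1 = 1"
  using assms by (simp add: SOm_def det_2)

lemma orbit_in_MC:
  assumes A: "A \<in> SOm" and B: "B \<in> SOm"
  shows "act (blk A B) (e1v, vector [C, r, 0]) \<in> MC C"
proof -
  note ra = SO3_rel[OF A]
  note af = act_formula[OF ra(1), of B "vector [C, r, 0]"]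
  have key: "snd (act (blk A B) (e1v, vector [C, r, 0])) $ 1 * A$1$1
    + snd (act (blk A B) (e1v, vector [C, r, 0])) $ 2 * A$2$1
    - snd (act (blk A B) (e1v, vector [C, r, 0])) $ 3 * A$3$1
    = 1/2 * C * ((A$1$1)\<^sup>2 + (A$2$1)\<^sup>2 + (A$3$1)\<^sup>2) *
      ((A$1$1 * A$2$2 * A$3$3 + A$1$2 * A$2$3 * A$3$1 + A$1$3 * A$2$1 * A$3$2
     - A$1$1 * A$2$3 * A$3$2 - A$1$2 * A$2$1 * A$3$3 - A$1$3 * A$2$2 * A$3$1)
      + (B$1$1 * B$2$2 - B$1$2 * B$2$1))"
    unfolding af by (simp add: field_simps power2_eq_square)
  have "snd (act (blk A B) (e1v, vector [C, r, 0])) $ 1 * A$1$1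
    + snd (act (blk A B) (e1v, vector [C, r, 0])) $ 2 * A$2$1
    - snd (act (blk A B) (e1v, vector [C, r, 0])) $ 3 * A$3$1 = C"
    unfolding key ra(1) ra(3) SO2_rel[OF B] by simp
  then show ?thesis using ra(1) unfolding mem_MC by (simp add: act_def blk_e1)
qed

lemma act_I:
  assumes A: "A \<in> SOm"
  shows "act (blk A (mat 1)) (e1v, vector [C, r, 0]) =
    (vector [A$1$1, A$2$1, A$3$1, 0, 0],
     vector [A$1$1 * C + A$1$2 * r, A$2$1 * C + A$2$2 * r, - (A$3$1 * C + A$3$2 * r)])"
proof -
  note ra = SO3_rel[OF A]
  note af = act_formula[OF ra(1), of "mat 1" "vector [C, r, 0]"]
  let ?R = "(A$1$1)\<^sup>2 + (A$2$1)\<^sup>2 + (A$3$1)\<^sup>2"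
  let ?c = "A$1$1 * A$1$2 + A$2$1 * A$2$2 + A$3$1 * A$3$2"
  let ?d = "A$1$1 * A$2$2 * A$3$3 + A$1$2 * A$2$3 * A$3$1 + A$1$3 * A$2$1 * A$3$2
     - A$1$1 * A$2$3 * A$3$2 - A$1$2 * A$2$1 * A$3$3 - A$1$3 * A$2$2 * A$3$1"
  have m: "(mat 1 :: real^2^2) $ 1 $ 1 = 1" "(mat 1 :: real^2^2) $ 2 $ 2 = 1"
    "(mat 1 :: real^2^2) $ 1 $ 2 = 0" "(mat 1 :: real^2^2) $ 2 $ 1 = 0" by (simp_all add: mat_def)
  have s1: "snd (act (blk A (mat 1)) (e1v, vector [C, r, 0])) $ 1 = A$1$1 * C + A$1$2 * r
     + 1/2 * C * A$1$1 * (?d - 1) + r/2 * (A$1$2 * (?R - 1) - A$1$1 * ?c + (A$2$3 * A$3$1 - A$2$1 * A$3$3 - A$1$2))"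
    unfolding af m by (simp add: field_simps power2_eq_square)
  have s2: "snd (act (blk A (mat 1)) (e1v, vector [C, r, 0])) $ 2 = A$2$1 * C + A$2$2 * r
     + 1/2 * C * A$2$1 * (?d - 1) + r/2 * (A$2$2 * (?R - 1) - A$2$1 * ?c + (A$1$1 * A$3$3 - A$1$3 * A$3$1 - A$2$2))"
    unfolding af m by (simp add: field_simps power2_eq_square)
  have s3: "snd (act (blk A (mat 1)) (e1v, vector [C, r, 0])) $ 3 = - (A$3$1 * C + A$3$2 * r)
     - 1/2 * C * A$3$1 * (?d - 1) + r/2 * (- A$3$2 * (?R - 1) + A$3$1 * ?c - (A$1$3 * A$2$1 - A$1$1 * A$2$3 - A$3$2))"
    unfolding af m by (simp add: field_simps power2_eq_square)
  have f: "fst (act (blk A (mat 1)) (e1v, vector [C, r, 0])) = vector [A$1$1, A$2$1, A$3$1, 0, 0]"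
    by (simp add: act_def blk_e1)
  have sn: "snd (act (blk A (mat 1)) (e1v, vector [C, r, 0])) = vector [A$1$1 * C + A$1$2 * r, A$2$1 * C + A$2$2 * r, - (A$3$1 * C + A$3$2 * r)]"
    unfolding vec3_eq_iff s1 s2 s3 ra(1) ra(2) ra(3) ra(4) ra(5) ra(6) by simp
  show ?thesis using f sn by (simp add: prod_eq_iff)
qed

definition mkA :: "real^3 \<Rightarrow> real^3 \<Rightarrow> real^3^3" where
  "mkA c n = vector [vector [c$1, n$1, c$2 * n$3 - c$3 * n$2],
                     vector [c$2, n$2, c$3 * n$1 - c$1 * n$3],
                     vector [c$3, n$3, c$1 * n$2 - c$2 * n$1]]"

lemma mkA_SO:
  assumes cc: "c \<bullet> c = 1" and nn: "n \<bullet> n = 1" and cn: "c \<bullet> n = 0"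
  shows "mkA c n \<in> SOm"
proof -
  let ?A = "mkA c n"
  have ent: "?A$1$1 = c$1" "?A$2$1 = c$2" "?A$3$1 = c$3" "?A$1$2 = n$1" "?A$2$2 = n$2" "?A$3$2 = n$3"
    "?A$1$3 = c$2 * n$3 - c$3 * n$2" "?A$2$3 = c$3 * n$1 - c$1 * n$3" "?A$3$3 = c$1 * n$2 - c$2 * n$1"
    by (simp_all add: mkA_def)
  have mm: "(transpose ?A ** ?A) $ i $ j = ?A$1$i * ?A$1$j + ?A$2$i * ?A$2$j + ?A$3$i * ?A$3$j" for i j
    by (simp add: matrix_matrix_mult_def transpose_def sum_3)
  have cc': "c$1 * c$1 + c$2 * c$2 + c$3 * c$3 = 1" using cc by (simp add: inner3)
  have nn': "n$1 * n$1 + n$2 * n$2 + n$3 * n$3 = 1" using nn by (simp add: inner3)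
  have cn': "c$1 * n$1 + c$2 * n$2 + c$3 * n$3 = 0" using cn by (simp add: inner3)
  have L: "(c$2 * n$3 - c$3 * n$2) * (c$2 * n$3 - c$3 * n$2) + (c$3 * n$1 - c$1 * n$3) * (c$3 * n$1 - c$1 * n$3)
     + (c$1 * n$2 - c$2 * n$1) * (c$1 * n$2 - c$2 * n$1)
     = (c$1 * c$1 + c$2 * c$2 + c$3 * c$3) * (n$1 * n$1 + n$2 * n$2 + n$3 * n$3)
       - (c$1 * n$1 + c$2 * n$2 + c$3 * n$3) * (c$1 * n$1 + c$2 * n$2 + c$3 * n$3)"
    by (simp add: algebra_simps)
  have o1: "c$1 * (c$2 * n$3 - c$3 * n$2) + c$2 * (c$3 * n$1 - c$1 * n$3) + c$3 * (c$1 * n$2 - c$2 * n$1) = 0"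
    by (simp add: algebra_simps)
  have o2: "n$1 * (c$2 * n$3 - c$3 * n$2) + n$2 * (c$3 * n$1 - c$1 * n$3) + n$3 * (c$1 * n$2 - c$2 * n$1) = 0"
    by (simp add: algebra_simps)
  have e11: "(transpose ?A ** ?A) $ 1 $ 1 = 1" unfolding mm ent cc' by simp
  have e22: "(transpose ?A ** ?A) $ 2 $ 2 = 1" unfolding mm ent nn' by simp
  have e33: "(transpose ?A ** ?A) $ 3 $ 3 = 1" unfolding mm ent L cc' nn' cn' by simp
  have e12: "(transpose ?A ** ?A) $ 1 $ 2 = 0" "(transpose ?A ** ?A) $ 2 $ 1 = 0"
    unfolding mm ent using cn' by (simp_all add: algebra_simps)
  have e13: "(transpose ?A ** ?A) $ 1 $ 3 = 0" "(transpose ?A ** ?A) $ 3 $ 1 = 0"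
    unfolding mm ent using o1 by (simp_all add: algebra_simps)
  have e23: "(transpose ?A ** ?A) $ 2 $ 3 = 0" "(transpose ?A ** ?A) $ 3 $ 2 = 0"
    unfolding mm ent using o2 by (simp_all add: algebra_simps)
  have e: "(transpose ?A ** ?A) $ i $ j = (mat 1 :: real^3^3) $ i $ j" for i j
  proof -
    have "i = 1 \<or> i = 2 \<or> i = 3" "j = 1 \<or> j = 2 \<or> j = 3" using exhaust_3 by auto
    then show ?thesis using e11 e22 e33 e12 e13 e23 by (elim disjE) (simp_all add: mat_def)
  qed
  have t: "transpose ?A ** ?A = mat 1" by (simp add: vec_eq_iff e)
  then have t2: "?A ** transpose ?A = mat 1" by (rule matrix_left_right_inverse1)
  have "det ?A = (c$1 * c$1 + c$2 * c$2 + c$3 * c$3) * (n$1 * n$1 + n$2 * n$2 + n$3 * n$3)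
       - (c$1 * n$1 + c$2 * n$2 + c$3 * n$3) * (c$1 * n$1 + c$2 * n$2 + c$3 * n$3)"
    unfolding det_3 ent by (simp add: algebra_simps)
  then have d: "det ?A = 1" unfolding cc' nn' cn' by simp
  show ?thesis unfolding SOm_def orthogonal_matrix_def using t t2 d by simp
qed

definition perpv :: "real^3 \<Rightarrow> real^3" where
  "perpv c = (if (c$1)\<^sup>2 + (c$2)\<^sup>2 \<noteq> 0 then (1 / sqrt ((c$1)\<^sup>2 + (c$2)\<^sup>2)) *\<^sub>R vector [- c$2, c$1, 0]
     else vector [1, 0, 0])"

lemma perpv:
  assumes "c \<bullet> c = 1"
  shows "perpv c \<bullet> perpv c = 1" "c \<bullet> perpv c = 0"
proof -
  show "perpv c \<bullet> perpv c = 1"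
  proof (cases "(c$1)\<^sup>2 + (c$2)\<^sup>2 \<noteq> 0")
    case True
    define S where "S = (c$1)\<^sup>2 + (c$2)\<^sup>2"
    have p: "S > 0" using True unfolding S_def by (simp add: add_nonneg_nonneg order_le_neq_trans)
    have w: "vector [- c$2, c$1, 0] \<bullet> (vector [- c$2, c$1, 0] :: real^3) = S"
      by (simp add: inner3 S_def power2_eq_square)
    have "perpv c \<bullet> perpv c = (1 / sqrt S) * (1 / sqrt S) * S"
      using True unfolding perpv_def S_def[symmetric] by (simp add: w)
    also have "\<dots> = S / (sqrt S * sqrt S)" by simp
    also have "\<dots> = 1" using p by (simp add: real_sqrt_mult_self)
    finally show ?thesis .
  next
    case False
    then have "c$1 = 0" "c$2 = 0" by (simp_all add: sum_power2_eq_zero_iff)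
    then show ?thesis by (simp add: perpv_def inner3)
  qed
  show "c \<bullet> perpv c = 0"
  proof (cases "(c$1)\<^sup>2 + (c$2)\<^sup>2 \<noteq> 0")
    case True then show ?thesis by (simp add: perpv_def inner3 algebra_simps)
  next
    case False
    then have "c$1 = 0" "c$2 = 0" by (simp_all add: sum_power2_eq_zero_iff)
    then show ?thesis by (simp add: perpv_def inner3)
  qed
qed

lemma MC_sub_orbit: "MC C \<subseteq> orbitC C"
proof
  fix p assume p: "p \<in> MC C"
  obtain x a where pxa: "p = (x, a)" by (cases p)
  have x4: "x$4 = 0" and x5: "x$5 = 0" and R: "(x$1)\<^sup>2 + (x$2)\<^sup>2 + (x$3)\<^sup>2 = 1"
    and Ca: "a$1 * x$1 + a$2 * x$2 - a$3 * x$3 = C"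
    using p by (simp_all add: mem_MC pxa)
  define c where "c = x3v x"
  have cc: "c \<bullet> c = 1" using R by (simp add: c_def x3v_def inner3 power2_eq_square)
  define v where "v = sg a - C *\<^sub>R c"
  have cv: "c \<bullet> v = 0"
  proof -
    have "c \<bullet> v = (a$1 * x$1 + a$2 * x$2 - a$3 * x$3) - C * (c \<bullet> c)"
      by (simp add: v_def c_def x3v_def sg_def inner3 algebra_simps)
    then show ?thesis unfolding Ca cc by simp
  qed
  define n where "n = (if v \<noteq> 0 then (1 / norm v) *\<^sub>R v else perpv c)"
  define r where "r = (if v \<noteq> 0 then norm v else 0)"
  have nn: "n \<bullet> n = 1" and cn: "c \<bullet> n = 0" and rn: "r *\<^sub>R n = v"
  proof -
    show "n \<bullet> n = 1"
    proof (cases "v = 0")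
      case False then show ?thesis by (simp add: n_def inner_commute dot_square_norm power2_eq_square)
    next
      case True then show ?thesis using perpv(1)[OF cc] by (simp add: n_def)
    qed
    show "c \<bullet> n = 0"
    proof (cases "v = 0")
      case False then show ?thesis using cv by (simp add: n_def)
    next
      case True then show ?thesis using perpv(2)[OF cc] by (simp add: n_def)
    qed
    show "r *\<^sub>R n = v" by (simp add: r_def n_def)
  qed
  define A where "A = mkA c n"
  have A: "A \<in> SOm" unfolding A_def by (rule mkA_SO[OF cc nn cn])
  have B: "(mat 1 :: real^2^2) \<in> SOm" by (simp add: SOm_def orthogonal_matrix_id)
  have sga: "sg a = C *\<^sub>R c + r *\<^sub>R n" unfolding rn v_def by simp
  have comps: "a$1 = C * c$1 + r * n$1" "a$2 = C * c$2 + r * n$2" "- a$3 = C * c$3 + r * n$3"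
    using sga by (simp_all add: vec3_eq_iff sg_def)
  have "act (blk A (mat 1)) (e1v, vector [C, r, 0]) = p"
    unfolding act_I[OF A] pxa prod.inject
  proof
    show "vector [A$1$1, A$2$1, A$3$1, 0, 0] = x"
      using x4 x5 by (simp add: A_def mkA_def c_def x3v_def vec5_eq_iff)
    show "vector [A$1$1 * C + A$1$2 * r, A$2$1 * C + A$2$2 * r, - (A$3$1 * C + A$3$2 * r)] = a"
      using comps by (simp add: A_def mkA_def vec3_eq_iff algebra_simps)
  qed
  then show "p \<in> orbitC C" unfolding orbitC_def e1v_def[symmetric] using A B by blast
qed

lemma MC_eq_orbit: "MC C = orbitC C"
proof
  show "MC C \<subseteq> orbitC C" by (rule MC_sub_orbit)
  show "orbitC C \<subseteq> MC C"
    unfolding orbitC_def e1v_def[symmetric] using orbit_in_MC by blast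
qed


theorem mainTheorem10:
  fixes lam C :: real
  assumes "lam > 0"
  shows "MC C = orbitC C \<and> coassociative lam (MC C) \<and> MC C homeomorphic TS2"
  by (intro conjI MC_eq_orbit coassoc_MC MC_homeo)

end
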